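(* Let $n\ge2$, $m\ge1$, and let $\mathcal{A}_m$ and the coefficients $c_{\mathbf{k}}$ be as follows: $\mathcal{A}_m$ is the set of vectors $\mathbf{k}=(k_1,\dots,k_m)$ of non-negative integers with $\sum_{i=1}^m i k_i=m$, and $c_{\mathbf{k}}=c_{\mathbf{k},0}+\sum_{j=1}^{m-1} j(k_j+1)c_{\mathbf{k},j}$ with $c_{\mathbf{k},0}=c_{(k_1-1,k_2,\dots)}$, $c_{\mathbf{k},j}=c_{(k_1,\dots,k_j+1,k_{j+1}-1,\dots)}$, and boundary conditions $c_{\mathbf{k}}=0$ if all $k_i=0$ or some coordinate is negative, $c_{\mathbf{k}}=1$ if $k_1\ge1$ and all other $k_i=0$. Then $$E\big[(\tau^{(n)})^m\big]=(-1)^{m+1}\frac{2\,m!}{n-1}+\frac{n+1}{n-1}\sum_{\mathbf{k}\in\mathcal{A}_m}c_{\mathbf{k}}\Big(\prod_{\substack{1\le i\le m\\ i\text{ even}}}H_{n,i}^{k_i}\Big)\Big(\prod_{\substack{1\le i\le m\\ i\text{ odd}}}(H_{n,i}-2)^{k_i}\Big).$$ In particular $E[\tau^{(n)}]=\frac{n+1}{n-1}H_{n,1}-\frac{2n}{n-1}$ and $E[(\tau^{(n)})^2]=\frac{n+1}{n-1}\big((H_{n,1}-2)^2+H_{n,2}\big)-\frac{4}{n-1}$.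
   Context: Fix $n\ge 2$. A Yule tree with speciation rate 1 on $n$ tips: start with a single lineage; each lineage independently splits into two at rate 1; the process is stopped just before the $n$-th speciation event, so the tree has $n$ tips and $n-1$ speciation (internal) nodes, numbered $1,\dots,n-1$ chronologically from the root. For $i=1,\dots,n$ let $T_i$ be the length of the time interval during which there are exactly $i$ lineages; the $T_i$ are independent, $T_i\sim\mathrm{Exp}(i)$ (rate $i$), the $k$-th speciation occurs at time $T_1+\dots+T_k$, and at each speciation the splitting lineage is uniformly chosen among current lineages, independently of the $T_i$. Choose an unordered pair of distinct tips uniformly at random and let $\kappa_n\in\{1,\dots,n-1\}$ be the index of the speciation event at which their lineages split; the coalescent time of the pair is $\tau^{(n)}=T_{\kappa_n+1}+\dots+T_n$. $H_{n,r}=\sum_{i=1}^n i^{-r}$. *)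

theory Defs
  imports "HOL-Probability.Probability"
begin

definition Hnr :: "nat \<Rightarrow> nat \<Rightarrow> real" where
  "Hnr n r = (\<Sum>i=1..n. 1 / (real i) ^ r)"

text \<open>A history is a list xs of length n-1;
  xs ! (k-1) \<in> {0..<k} is the lineage (among lineages 0..k-1) that splits at the
  k-th speciation event; the new daughter lineage gets label k.
  split_pmf j is the law of the first j choices (uniform, independent).\<close>
fun split_pmf :: "nat \<Rightarrow> nat list pmf" where
  "split_pmf 0 = return_pmf []"
| "split_pmf (Suc j) =
     bind_pmf (split_pmf j) (\<lambda>xs. map_pmf (\<lambda>s. xs @ [s]) (pmf_of_set {0..<Suc j}))"

text \<open>down xs a d: the lineage carrying tip a after undoing the last d speciation
  events (i.e. when there were length xs + 1 - d lineages).\<close>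
primrec down :: "nat list \<Rightarrow> nat \<Rightarrow> nat \<Rightarrow> nat" where
  "down xs a 0 = a"
| "down xs a (Suc d) =
     (let l = down xs a d; k = length xs - d in if l = k then xs ! (k - 1) else l)"

text \<open>Index of the speciation event at which the lineages of tips a and b split:
  the largest number k of lineages at which both tips still have the same ancestor.\<close>
definition split_index :: "nat \<Rightarrow> nat list \<Rightarrow> nat \<Rightarrow> nat \<Rightarrow> nat" where
  "split_index n xs a b = Max {k \<in> {1..n}. down xs a (n - k) = down xs b (n - k)}"

text \<open>Law of kappa_n: random Yule history plus a uniform unordered pair of tips.\<close>
definition kappa_pmf :: "nat \<Rightarrow> nat pmf" where
  "kappa_pmf n =
     bind_pmf (split_pmf (n - 1)) (\<lambda>xs.
       map_pmf (\<lambda>(a, b). split_index n xs a b) (pmf_of_set {(a, b). a < b \<and> b < n}))"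

text \<open>Joint law of (kappa_n, (T_1,...,T_n)), T_i ~ Exp(i) independent of everything.\<close>
definition yule_space :: "nat \<Rightarrow> (nat \<times> (nat \<Rightarrow> real)) measure" where
  "yule_space n = measure_pmf (kappa_pmf n) \<Otimes>\<^sub>M
     (\<Pi>\<^sub>M i\<in>{1..n}. density lborel (exponential_density (real i)))"

definition tau_moment :: "nat \<Rightarrow> nat \<Rightarrow> real" where
  "tau_moment n m = (\<integral>\<omega>. (\<Sum>i\<in>{fst \<omega> <..n}. snd \<omega> i) ^ m \<partial>yule_space n)"

text \<open>The coefficients c_k; vectors k are functions on indices 1,2,... (zero beyond m).
  The first argument is the weight sum_i i k_i of k (it serves as recursion fuel);
  the sum over j runs from 1 to (weight - 1).\<close>
fun ccoef :: "nat \<Rightarrow> (nat \<Rightarrow> int) \<Rightarrow> int" where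
  "ccoef 0 k = 0"
| "ccoef (Suc w) k =
     (if (\<forall>i\<ge>1. k i = 0) \<or> (\<exists>i\<ge>1. k i < 0) then 0
      else if k 1 \<ge> 1 \<and> (\<forall>i\<ge>2. k i = 0) then 1
      else ccoef w (k(1 := k 1 - 1))
         + (\<Sum>j=1..w. int j * (k j + 1) * ccoef w (k(j := k j + 1, Suc j := k (Suc j) - 1))))"

definition Avec :: "nat \<Rightarrow> (nat \<Rightarrow> int) set" where
  "Avec m = {k. (\<forall>i. (i = 0 \<or> i > m) \<longrightarrow> k i = 0) \<and> (\<forall>i. k i \<ge> 0)
               \<and> (\<Sum>i=1..m. int i * k i) = int m}"

end

theory Submission
  imports Defs "HOL-Computational_Algebra.Formal_Power_Series"
begin

lemma exp_moment:
  assumes l: "0 < l"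
  shows "(\<integral>\<^sup>+ y. ennreal (exponential_density l y) * ennreal (y ^ k) \<partial>lborel) = ennreal (fact k / l ^ k)"
proof -
  have "(\<integral>\<^sup>+ y. ennreal (exponential_density l y) * ennreal (y ^ k) \<partial>lborel)
     = (\<integral>\<^sup>+ y. ennreal (erlang_density 0 l y * y ^ k) \<partial>lborel)"
    by (intro nn_integral_cong) (use l in \<open>auto simp: erlang_density_def ennreal_mult[symmetric]\<close>)
  also have "\<dots> = fact k / (fact 0 * l ^ k)"
    using nn_integral_erlang_ith_moment[OF l, of 0 k] by simp
  finally show ?thesis by simp
qed

definition Efps :: "real \<Rightarrow> real fps" where
  "Efps l = Abs_fps (\<lambda>k. (1 / l) ^ k)"

lemma fps_nonneg_mult:
  fixes f g :: "real fps"
  assumes "\<And>k. 0 \<le> fps_nth f k" "\<And>k. 0 \<le> fps_nth g k"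
  shows "0 \<le> fps_nth (f * g) k"
  unfolding fps_mult_nth using assms by (auto intro!: sum_nonneg mult_nonneg_nonneg)

lemma fps_nonneg_prod:
  assumes "\<And>i k. i \<in> S \<Longrightarrow> 0 \<le> fps_nth (f i :: real fps) k"
  shows "0 \<le> fps_nth (\<Prod>i\<in>S. f i) k"
  using assms
proof (induction S arbitrary: k rule: infinite_finite_induct)
  case (insert x F)
  then show ?case by (simp add: fps_nonneg_mult)
qed auto

lemma Efps_nonneg: "0 \<le> l \<Longrightarrow> 0 \<le> fps_nth (Efps l) k"
  by (simp add: Efps_def)

lemma fps_exp_nonneg: "0 \<le> (z::real) \<Longrightarrow> 0 \<le> fps_nth (fps_exp z) k"
  by simp

lemma prob_space_M:
  assumes "0 < l" shows "prob_space (density lborel (exponential_density l))"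
  using prob_space_exponential_density[OF assms] .

lemma pim_moment:
  fixes lam :: "nat \<Rightarrow> real"
  assumes lam: "\<And>i. 0 < lam i"
  shows "finite I \<Longrightarrow> S \<subseteq> I \<Longrightarrow> 0 \<le> z \<Longrightarrow>
    (\<integral>\<^sup>+x. ennreal ((z + (\<Sum>i\<in>S. x i)) ^ m)
       \<partial>PiM I (\<lambda>i. density lborel (exponential_density (lam i))))
    = ennreal (fact m * fps_nth (fps_exp z * (\<Prod>i\<in>S. Efps (lam i))) m)"
proof (induction I arbitrary: S z m rule: finite_induct)
  case empty
  then show ?case by (simp add: PiM_empty)
next
  case (insert i I)
  define M where "M = (\<lambda>i. density lborel (exponential_density (lam i)))"
  interpret product_prob_space M
    unfolding product_prob_space_def product_prob_space_axioms_def product_sigma_finite_def M_def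
    using prob_space_M[OF lam] by (auto simp: prob_space_imp_sigma_finite)
  have meas: "(\<lambda>x. ennreal ((z + (\<Sum>i\<in>S. x i)) ^ m)) \<in> borel_measurable (PiM (insert i I) M)"
  proof -
    have comp: "j \<in> insert i I \<Longrightarrow> (\<lambda>x. x j) \<in> borel_measurable (PiM (insert i I) M)" for j
      using measurable_component_singleton[of j "insert i I" M]
      by (simp add: M_def cong: measurable_cong_sets)
    show ?thesis using insert.prems(1) comp by (intro measurable_compose[OF _ measurable_ennreal] borel_measurable_power borel_measurable_add borel_measurable_sum) auto
  qed
  show ?case
  proof (cases "i \<in> S")
    case False
    then have SI: "S \<subseteq> I" using insert by auto
    have "(\<integral>\<^sup>+x. ennreal ((z + (\<Sum>i\<in>S. x i)) ^ m) \<partial>PiM (insert i I) M)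
       = (\<integral>\<^sup>+ y. (\<integral>\<^sup>+ x. ennreal ((z + (\<Sum>j\<in>S. (x(i := y)) j)) ^ m) \<partial>(PiM I M)) \<partial>(M i))"
      by (rule product_nn_integral_insert_rev[OF insert.hyps meas])
    also have "\<dots> = (\<integral>\<^sup>+ y. ennreal (fact m * fps_nth (fps_exp z * (\<Prod>i\<in>S. Efps (lam i))) m) \<partial>(M i))"
    proof (rule nn_integral_cong)
      fix y :: real
      have "(\<Sum>j\<in>S. (x(i := y)) j) = (\<Sum>j\<in>S. x j)" for x
        using False by (intro sum.cong) auto
      then show "(\<integral>\<^sup>+ x. ennreal ((z + (\<Sum>j\<in>S. (x(i := y)) j)) ^ m) \<partial>(PiM I M)) = ennreal (fact m * fps_nth (fps_exp z * (\<Prod>i\<in>S. Efps (lam i))) m)"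
        using insert.IH[OF SI insert.prems(2)] by (simp add: M_def)
    qed
    also have "\<dots> = ennreal (fact m * fps_nth (fps_exp z * (\<Prod>i\<in>S. Efps (lam i))) m)"
      using M.emeasure_space_1 by simp
    finally show ?thesis by (simp add: M_def)
  next
    case True
    define S' where "S' = S - {i}"
    have SI: "S' \<subseteq> I" using insert True by (auto simp: S'_def)
    have S: "S = insert i S'" "i \<notin> S'" using True by (auto simp: S'_def)
    have finS': "finite S'" using SI insert.hyps(1) finite_subset by auto
    define Q where "Q = fps_exp z * (\<Prod>j\<in>S'. Efps (lam j))"
    have Qnn: "0 \<le> fps_nth Q k" for k
      unfolding Q_def using insert.prems(2) lam
      by (intro fps_nonneg_mult fps_nonneg_prod Efps_nonneg) (auto intro: less_imp_le)
    have eq: "(\<Sum>j\<in>S. (x(i := y)) j) = y + (\<Sum>j\<in>S'. x j)" for x :: "nat \<Rightarrow> real" and y :: real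
      using S finS' by (simp, intro sum.cong) auto
    have "(\<integral>\<^sup>+x. ennreal ((z + (\<Sum>i\<in>S. x i)) ^ m) \<partial>PiM (insert i I) M)
       = (\<integral>\<^sup>+ y. (\<integral>\<^sup>+ x. ennreal ((z + (\<Sum>j\<in>S. (x(i := y)) j)) ^ m) \<partial>(PiM I M)) \<partial>(M i))"
      by (rule product_nn_integral_insert_rev[OF insert.hyps meas])
    also have "\<dots> = (\<integral>\<^sup>+ y. (\<integral>\<^sup>+ x. ennreal ((z + (y + (\<Sum>j\<in>S'. x j))) ^ m) \<partial>(PiM I M)) \<partial>(M i))"
      unfolding eq ..
    also have "\<dots> = (\<integral>\<^sup>+ y. ennreal (exponential_density (lam i) y) *
        (\<integral>\<^sup>+ x. ennreal ((z + (y + (\<Sum>j\<in>S'. x j))) ^ m) \<partial>(PiM I M)) \<partial>lborel)"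
    proof -
      have comp: "j \<in> I \<Longrightarrow> (\<lambda>x. x j) \<in> borel_measurable (PiM I M)" for j
        using measurable_component_singleton[of j I M]
        by (simp add: M_def cong: measurable_cong_sets)
      have f1: "fst \<in> borel_measurable (M i \<Otimes>\<^sub>M PiM I M)"
        using measurable_fst[of "M i" "PiM I M"] by (simp add: M_def cong: measurable_cong_sets)
      have f2: "j \<in> I \<Longrightarrow> (\<lambda>p. snd p j) \<in> borel_measurable (M i \<Otimes>\<^sub>M PiM I M)" for j
        using measurable_compose[OF measurable_snd comp] by blast
      have g0: "(\<lambda>p. ennreal ((z + (fst p + (\<Sum>j\<in>S'. snd p j))) ^ m)) \<in> borel_measurable (M i \<Otimes>\<^sub>M PiM I M)"
        using SI f1 f2
        by (intro measurable_compose[OF _ measurable_ennreal] borel_measurable_power borel_measurable_add borel_measurable_sum) auto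
      have g: "(\<lambda>(y, x). ennreal ((z + (y + (\<Sum>j\<in>S'. x j))) ^ m)) \<in> borel_measurable (M i \<Otimes>\<^sub>M PiM I M)"
        using g0 by (simp add: split_beta)
      have "(\<lambda>y. \<integral>\<^sup>+ x. ennreal ((z + (y + (\<Sum>j\<in>S'. x j))) ^ m) \<partial>(PiM I M)) \<in> borel_measurable (M i)"
        using sigma_finite_measure.borel_measurable_nn_integral_fst[OF _ g]
          prob_space_imp_sigma_finite[OF prob_space_PiM[of I M]] prob_space_M[OF lam] by (simp add: M_def)
      then show ?thesis unfolding M_def
        by (intro nn_integral_density) (auto simp: exponential_density_def)
    qed
    also have "\<dots> = (\<integral>\<^sup>+ y. (\<Sum>k\<le>m. ennreal (exponential_density (lam i) y * y ^ k)
           * ennreal (fact m / fact k * fps_nth Q (m - k))) \<partial>lborel)"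
    proof (rule nn_integral_cong)
      fix y :: real
      show "ennreal (exponential_density (lam i) y) *
        (\<integral>\<^sup>+ x. ennreal ((z + (y + (\<Sum>j\<in>S'. x j))) ^ m) \<partial>(PiM I M))
        = (\<Sum>k\<le>m. ennreal (exponential_density (lam i) y * y ^ k)
           * ennreal (fact m / fact k * fps_nth Q (m - k)))"
      proof (cases "y < 0")
        case True
        then show ?thesis by (simp add: exponential_density_def)
      next
        case False
        have "(\<integral>\<^sup>+ x. ennreal ((z + (y + (\<Sum>j\<in>S'. x j))) ^ m) \<partial>(PiM I M))
            = ennreal (fact m * fps_nth (fps_exp (z + y) * (\<Prod>j\<in>S'. Efps (lam j))) m)"
          using insert.IH[OF SI, of "z + y" m] False insert.prems(2)
          by (simp add: M_def add.assoc)
        also have "fps_exp (z + y) * (\<Prod>j\<in>S'. Efps (lam j)) = fps_exp y * Q"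
          by (simp add: Q_def fps_exp_add_mult mult_ac)
        also have "fps_nth (fps_exp y * Q) m = (\<Sum>k\<le>m. y ^ k / fact k * fps_nth Q (m - k))"
          by (simp add: fps_mult_nth atLeast0AtMost)
        finally have I: "(\<integral>\<^sup>+ x. ennreal ((z + (y + (\<Sum>j\<in>S'. x j))) ^ m) \<partial>(PiM I M))
           = ennreal (fact m * (\<Sum>k\<le>m. y ^ k / fact k * fps_nth Q (m - k)))" .
        have d: "0 \<le> exponential_density (lam i) y" using lam[of i] by (simp add: exponential_density_def)
        have "ennreal (exponential_density (lam i) y) * ennreal (fact m * (\<Sum>k\<le>m. y ^ k / fact k * fps_nth Q (m - k)))
           = ennreal (\<Sum>k\<le>m. (exponential_density (lam i) y * y ^ k) * (fact m / fact k * fps_nth Q (m - k)))"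
          using d False Qnn
          by (subst ennreal_mult[symmetric]) (auto intro!: sum_nonneg arg_cong[where f=ennreal] simp: sum_distrib_left mult_ac)
        also have "\<dots> = (\<Sum>k\<le>m. ennreal (exponential_density (lam i) y * y ^ k)
           * ennreal (fact m / fact k * fps_nth Q (m - k)))"
          using d False Qnn
          by (subst sum_ennreal[symmetric]) (auto intro!: sum.cong simp: ennreal_mult[symmetric])
        finally show ?thesis using I by simp
      qed
    qed
    also have "\<dots> = (\<Sum>k\<le>m. (\<integral>\<^sup>+ y. ennreal (exponential_density (lam i) y * y ^ k)
           * ennreal (fact m / fact k * fps_nth Q (m - k)) \<partial>lborel))"
      by (rule nn_integral_sum) auto
    also have "\<dots> = (\<Sum>k\<le>m. ennreal (fact k / lam i ^ k) * ennreal (fact m / fact k * fps_nth Q (m - k)))"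
    proof (rule sum.cong[OF refl])
      fix k assume "k \<in> {..m}"
      have "(\<integral>\<^sup>+ y. ennreal (exponential_density (lam i) y * y ^ k)
           * ennreal (fact m / fact k * fps_nth Q (m - k)) \<partial>lborel)
          = (\<integral>\<^sup>+ y. ennreal (exponential_density (lam i) y * y ^ k) \<partial>lborel) * ennreal (fact m / fact k * fps_nth Q (m - k))"
        by (rule nn_integral_multc) auto
      also have "(\<integral>\<^sup>+ y. ennreal (exponential_density (lam i) y * y ^ k) \<partial>lborel) = ennreal (fact k / lam i ^ k)"
        using nn_integral_erlang_ith_moment[OF lam[of i], of 0 k] by simp
      finally show "(\<integral>\<^sup>+ y. ennreal (exponential_density (lam i) y * y ^ k)
           * ennreal (fact m / fact k * fps_nth Q (m - k)) \<partial>lborel) = ennreal (fact k / lam i ^ k) * ennreal (fact m / fact k * fps_nth Q (m - k))" .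
    qed
    also have "\<dots> = ennreal (\<Sum>k\<le>m. (fact k / lam i ^ k) * (fact m / fact k * fps_nth Q (m - k)))"
      using Qnn lam[of i] by (subst sum_ennreal[symmetric]) (auto intro!: sum.cong simp: ennreal_mult[symmetric])
    also have "(\<Sum>k\<le>m. (fact k / lam i ^ k) * (fact m / fact k * fps_nth Q (m - k)))
       = fact m * fps_nth (Efps (lam i) * Q) m"
      by (simp add: fps_mult_nth atLeast0AtMost sum_distrib_left Efps_def power_divide)
    also have "Efps (lam i) * Q = fps_exp z * (\<Prod>i\<in>S. Efps (lam i))"
      using S finS' by (simp add: Q_def mult_ac)
    finally show ?thesis by (simp add: M_def)
  qed
qed


lemma down_snoc:
  "d \<le> length xs \<Longrightarrow> down (xs @ [s]) a (Suc d) = down xs (if a = Suc (length xs) then s else a) d"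
proof (induction d)
  case 0
  then show ?case by (simp add: Let_def)
next
  case (Suc d)
  then have IH: "down (xs @ [s]) a (Suc d) = down xs (if a = Suc (length xs) then s else a) d" by simp
  have k: "length xs - d - 1 < length xs" "length xs - d \<ge> 1" using Suc.prems by auto
  have "down (xs @ [s]) a (Suc (Suc d)) = (let l = down (xs @ [s]) a (Suc d); k = length (xs @ [s]) - Suc d in if l = k then (xs @ [s]) ! (k - 1) else l)"
    by (rule down.simps(2))
  also have "\<dots> = (let l = down xs (if a = Suc (length xs) then s else a) d; k = length xs - d in if l = k then xs ! (k - 1) else l)"
    using k by (simp del: down.simps add: IH Let_def nth_append)
  also have "\<dots> = down xs (if a = Suc (length xs) then s else a) (Suc d)"
    by (rule down.simps(2)[symmetric])
  finally show ?case .
qed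

definition phi :: "nat \<Rightarrow> nat \<Rightarrow> nat \<Rightarrow> nat" where
  "phi L s a = (if a = Suc L then s else a)"

lemma split_index_snoc:
  assumes L: "length xs = L" and n: "n = L + 2" and ab: "a \<noteq> b"
  shows "split_index n (xs @ [s]) a b =
    (if phi L s a = phi L s b then n - 1 else split_index (n - 1) xs (phi L s a) (phi L s b))"
proof -
  have eq: "{k \<in> {1..n}. down (xs @ [s]) a (n - k) = down (xs @ [s]) b (n - k)}
     = {k \<in> {1..n - 1}. down xs (phi L s a) (n - 1 - k) = down xs (phi L s b) (n - 1 - k)}"
  proof (intro set_eqI iffI)
    fix k assume k: "k \<in> {k \<in> {1..n}. down (xs @ [s]) a (n - k) = down (xs @ [s]) b (n - k)}"
    then have "k \<noteq> n" using ab by auto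
    then have "n - k = Suc (n - 1 - k)" "n - 1 - k \<le> length xs" using k n L by auto
    then have D: "down (xs @ [s]) c (n - k) = down xs (phi L s c) (n - 1 - k)" for c
      using down_snoc[of "n - 1 - k" xs s c] L by (simp add: phi_def)
    then show "k \<in> {k \<in> {1..n - 1}. down xs (phi L s a) (n - 1 - k) = down xs (phi L s b) (n - 1 - k)}"
      using k \<open>k \<noteq> n\<close> by auto
  next
    fix k assume k: "k \<in> {k \<in> {1..n - 1}. down xs (phi L s a) (n - 1 - k) = down xs (phi L s b) (n - 1 - k)}"
    then have "n - k = Suc (n - 1 - k)" "n - 1 - k \<le> length xs" using k n L by auto
    then have D: "down (xs @ [s]) c (n - k) = down xs (phi L s c) (n - 1 - k)" for c
      using down_snoc[of "n - 1 - k" xs s c] L by (simp add: phi_def)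
    then show "k \<in> {k \<in> {1..n}. down (xs @ [s]) a (n - k) = down (xs @ [s]) b (n - k)}"
      using k by auto
  qed
  show ?thesis
  proof (cases "phi L s a = phi L s b")
    case True
    then have "{k \<in> {1..n - 1}. down xs (phi L s a) (n - 1 - k) = down xs (phi L s b) (n - 1 - k)} = {1..n-1}"
      by auto
    moreover have "Max {1..n-1} = n - 1" using n by (auto intro!: Max_eqI)
    ultimately show ?thesis using True n unfolding split_index_def eq by simp
  next
    case False
    then show ?thesis unfolding split_index_def eq by simp
  qed
qed

lemma split_index_sym: "split_index n xs a b = split_index n xs b a"
  unfolding split_index_def by metis

definition hist :: "nat \<Rightarrow> nat list set" where
  "hist j = {xs. length xs = j \<and> (\<forall>i<j. xs ! i \<le> i)}"

definition pairs :: "nat \<Rightarrow> (nat \<times> nat) set" where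
  "pairs n = {(a, b). a < b \<and> b < n}"

lemma hist_0: "hist 0 = {[]}"
  by (auto simp: hist_def)

lemma hist_Suc: "hist (Suc j) = (\<lambda>(xs, s). xs @ [s]) ` (hist j \<times> {0..<Suc j})"
proof (intro set_eqI iffI)
  fix ys assume ys: "ys \<in> hist (Suc j)"
  then have ne: "ys \<noteq> []" by (auto simp: hist_def)
  have "ys = butlast ys @ [last ys]" using ne by simp
  moreover have "butlast ys \<in> hist j" using ys by (auto simp: hist_def nth_butlast)
  moreover have "last ys < Suc j" using ys ne by (auto simp: hist_def last_conv_nth)
  ultimately show "ys \<in> (\<lambda>(xs, s). xs @ [s]) ` (hist j \<times> {0..<Suc j})"
    by (auto intro!: image_eqI[where x="(butlast ys, last ys)"])
next
  fix ys assume "ys \<in> (\<lambda>(xs, s). xs @ [s]) ` (hist j \<times> {0..<Suc j})"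
  then show "ys \<in> hist (Suc j)"
    by (auto simp: hist_def nth_append less_Suc_eq)
qed

lemma inj_snoc: "inj_on (\<lambda>(xs, s). xs @ [s]) A"
  by (auto simp: inj_on_def)

lemma finite_hist: "finite (hist j)" and hist_ne: "hist j \<noteq> {}"
  by (induction j) (auto simp: hist_0 hist_Suc)

lemma card_hist: "card (hist j) = fact j"
proof (induction j)
  case 0 then show ?case by (simp add: hist_0)
next
  case (Suc j)
  then show ?case
    by (simp add: hist_Suc card_image[OF inj_snoc] card_cartesian_product finite_hist)
qed

lemma finite_pairs: "finite (pairs n)"
  by (rule finite_subset[of _ "{..<n} \<times> {..<n}"]) (auto simp: pairs_def)

lemma pairs_Suc: "pairs (Suc N) = pairs N \<union> (\<lambda>a. (a, N)) ` {..<N}"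
  by (auto simp: pairs_def)

lemma sum_pairs_Suc:
  "(\<Sum>p\<in>pairs (Suc N). F p) = (\<Sum>p\<in>pairs N. F p) + (\<Sum>a<N. F (a, N))"
proof -
  have "(\<Sum>p\<in>pairs (Suc N). F p) = (\<Sum>p\<in>pairs N. F p) + (\<Sum>p\<in>(\<lambda>a. (a, N)) ` {..<N}. F p)"
    unfolding pairs_Suc apply (rule sum.union_disjoint) apply (rule finite_pairs) apply simp
    by (auto simp: pairs_def)
  also have "(\<Sum>p\<in>(\<lambda>a. (a, N)) ` {..<N}. F p) = (\<Sum>a<N. F (a, N))"
    by (subst sum.reindex) (auto simp: inj_on_def)
  finally show ?thesis .
qed

lemma sum_square_sym:
  fixes G :: "nat \<Rightarrow> nat \<Rightarrow> real"
  assumes sym: "\<And>a b. G a b = G b a"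
  shows "(\<Sum>a<N. \<Sum>s<N. G a s) = (\<Sum>a<N. G a a) + 2 * (\<Sum>p\<in>pairs N. G (fst p) (snd p))"
proof (induction N)
  case 0 then show ?case by (simp add: pairs_def)
next
  case (Suc N)
  have "(\<Sum>a<Suc N. \<Sum>s<Suc N. G a s) = (\<Sum>a<N. \<Sum>s<N. G a s) + (\<Sum>a<N. G a N) + (\<Sum>s<N. G N s) + G N N"
    by (simp add: sum.distrib)
  also have "(\<Sum>s<N. G N s) = (\<Sum>a<N. G a N)" using sym by simp
  finally show ?case using Suc by (simp add: sum_pairs_Suc algebra_simps)
qed

lemma sum_phi:
  fixes G :: "nat \<Rightarrow> nat \<Rightarrow> real"
  assumes sym: "\<And>a b. G a b = G b a" and N: "N = Suc L"
  shows "(\<Sum>s<N. \<Sum>p\<in>pairs (Suc N). G (phi L s (fst p)) (phi L s (snd p)))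
     = real (N + 2) * (\<Sum>p\<in>pairs N. G (fst p) (snd p)) + (\<Sum>a<N. G a a)"
proof -
  have "(\<Sum>s<N. \<Sum>p\<in>pairs (Suc N). G (phi L s (fst p)) (phi L s (snd p)))
     = (\<Sum>s<N. (\<Sum>p\<in>pairs N. G (fst p) (snd p)) + (\<Sum>a<N. G a s))"
  proof (rule sum.cong[OF refl])
    fix s assume "s \<in> {..<N}"
    have "(\<Sum>p\<in>pairs N. G (phi L s (fst p)) (phi L s (snd p))) = (\<Sum>p\<in>pairs N. G (fst p) (snd p))"
      using N by (intro sum.cong) (auto simp: pairs_def phi_def)
    moreover have "(\<Sum>a<N. G (phi L s a) (phi L s N)) = (\<Sum>a<N. G a s)"
      using N by (intro sum.cong) (auto simp: phi_def)
    ultimately show "(\<Sum>p\<in>pairs (Suc N). G (phi L s (fst p)) (phi L s (snd p)))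
        = (\<Sum>p\<in>pairs N. G (fst p) (snd p)) + (\<Sum>a<N. G a s)"
      by (simp add: sum_pairs_Suc)
  qed
  also have "\<dots> = real N * (\<Sum>p\<in>pairs N. G (fst p) (snd p)) + (\<Sum>a<N. \<Sum>s<N. G a s)"
    by (simp add: sum.distrib) (rule sum.swap)
  also have "\<dots> = real (N + 2) * (\<Sum>p\<in>pairs N. G (fst p) (snd p)) + (\<Sum>a<N. G a a)"
    using sum_square_sym[OF sym, where N=N] by (simp add: algebra_simps)
  finally show ?thesis .
qed

definition cnt :: "nat \<Rightarrow> nat \<Rightarrow> real" where
  "cnt n k = (\<Sum>xs\<in>hist (n - 1). \<Sum>p\<in>pairs n. if split_index n xs (fst p) (snd p) = k then 1 else 0)"

lemma cnt_rec:
  assumes n: "n \<ge> 2"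
  shows "cnt n k = real (n + 1) * cnt (n - 1) k + (if k = n - 1 then real (n - 1) * fact (n - 2) else 0)"
proof -
  obtain L where L: "n = L + 2" using n by (metis add.commute le_Suc_ex)
  define N where "N = Suc L"
  have "cnt n k = (\<Sum>xs\<in>hist (Suc L). \<Sum>p\<in>pairs n. if split_index n xs (fst p) (snd p) = k then 1 else 0)"
    by (simp add: cnt_def L)
  also have "\<dots> = (\<Sum>q\<in>hist L \<times> {0..<Suc L}. \<Sum>p\<in>pairs n. if split_index n (fst q @ [snd q]) (fst p) (snd p) = k then 1 else 0)"
    unfolding hist_Suc by (subst sum.reindex[OF inj_snoc]) (simp add: split_beta)
  also have "\<dots> = (\<Sum>xs\<in>hist L. \<Sum>s<N. \<Sum>p\<in>pairs (Suc N). if split_index n (xs @ [s]) (fst p) (snd p) = k then 1 else 0)"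
    by (subst sum.cartesian_product) (simp add: split_beta N_def L lessThan_atLeast0)
  also have "\<dots> = (\<Sum>xs\<in>hist L. real (n + 1) * (\<Sum>p\<in>pairs (n - 1). if split_index (n - 1) xs (fst p) (snd p) = k then 1 else 0)
        + (if k = n - 1 then real (n - 1) else 0))"
  proof (rule sum.cong[OF refl])
    fix xs assume xs: "xs \<in> hist L"
    define G where "G = (\<lambda>c d. if c = d then (if n - 1 = k then 1 else 0)
       else (if split_index (n - 1) xs c d = k then 1 else 0 :: real))"
    have Gs: "G a b = G b a" for a b by (simp add: G_def split_index_sym)
    have "(\<Sum>s<N. \<Sum>p\<in>pairs (Suc N). if split_index n (xs @ [s]) (fst p) (snd p) = k then 1 else 0)
        = (\<Sum>s<N. \<Sum>p\<in>pairs (Suc N). G (phi L s (fst p)) (phi L s (snd p)))"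
    proof (intro sum.cong refl)
      fix s p assume p: "p \<in> pairs (Suc N)"
      then have "fst p \<noteq> snd p" by (auto simp: pairs_def)
      moreover have "length xs = L" using xs by (simp add: hist_def)
      ultimately show "(if split_index n (xs @ [s]) (fst p) (snd p) = k then 1 else 0) = G (phi L s (fst p)) (phi L s (snd p))"
        using split_index_snoc[of xs L n "fst p" "snd p" s] L by (auto simp: G_def)
    qed
    also have "\<dots> = real (N + 2) * (\<Sum>p\<in>pairs N. G (fst p) (snd p)) + (\<Sum>a<N. G a a)"
      by (rule sum_phi[OF Gs N_def])
    also have "(\<Sum>p\<in>pairs N. G (fst p) (snd p)) = (\<Sum>p\<in>pairs (n - 1). if split_index (n - 1) xs (fst p) (snd p) = k then 1 else 0)"
      by (intro sum.cong) (auto simp: G_def pairs_def N_def L)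
    also have "(\<Sum>a<N. G a a) = (if k = n - 1 then real (n - 1) else 0)"
      by (auto simp: G_def N_def L)
    finally show "(\<Sum>s<N. \<Sum>p\<in>pairs (Suc N). if split_index n (xs @ [s]) (fst p) (snd p) = k then 1 else 0) =
        real (n + 1) * (\<Sum>p\<in>pairs (n - 1). if split_index (n - 1) xs (fst p) (snd p) = k then 1 else 0)
        + (if k = n - 1 then real (n - 1) else 0)"
      by (simp add: N_def L)
  qed
  also have "\<dots> = real (n + 1) * cnt (n - 1) k + (if k = n - 1 then real (n - 1) * fact (n - 2) else 0)"
    by (simp add: cnt_def sum.distrib sum_distrib_left card_hist L)
  finally show ?thesis .
qed

lemma cnt_closed:
  assumes "n \<ge> 1"
  shows "cnt n k = (if 1 \<le> k \<and> k \<le> n - 1 then fact n * real (n + 1) / (real (k + 1) * real (k + 2)) else 0)"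
  using assms
proof (induction n rule: dec_induct)
  case base
  have "pairs 1 = {}" by (auto simp: pairs_def)
  then show ?case by (simp add: cnt_def)
next
  case (step n)
  have "cnt (Suc n) k = real (n + 2) * cnt n k + (if k = n then real n * fact (n - 1) else 0)"
    using cnt_rec[of "Suc n" k] step.hyps by simp
  note eq = this
  have fn: "real n * fact (n - 1) = fact n" using step.hyps
    by (cases n) auto
  show ?case
  proof (cases "k = n")
    case True
    have c0: "cnt n k = 0" using step.IH True step.hyps by simp
    have "cnt (Suc n) k = fact n" using eq c0 fn True by simp
    moreover have "fact (Suc n) * real (Suc n + 1) / (real (k + 1) * real (k + 2)) = (fact n :: real)"
    proof -
      have "real (n+1) * real (n+2) \<noteq> 0" by simp
      then show ?thesis using True by (simp only: fact_Suc of_nat_mult) (simp add: field_simps)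
    qed
    ultimately show ?thesis using True step.hyps by simp
  next
    case False
    show ?thesis
    proof (cases "1 \<le> k \<and> k \<le> n - 1")
      case True
      have "cnt (Suc n) k = real (n + 2) * (fact n * real (n + 1) / (real (k + 1) * real (k + 2)))"
        using eq step.IH True False by simp
      also have "\<dots> = fact (Suc n) * real (Suc n + 1) / (real (k + 1) * real (k + 2))"
        by (simp add: algebra_simps)
      finally show ?thesis using True by auto
    next
      case nk: False
      then show ?thesis using eq step.IH False by auto
    qed
  qed
qed


lemma pmf_of_set_times:
  assumes "finite A" "A \<noteq> {}" "finite B" "B \<noteq> {}"
  shows "pmf_of_set (A \<times> B) = pair_pmf (pmf_of_set A) (pmf_of_set B)"
  by (rule pmf_eqI, clarify) (simp add: pmf_pair assms card_cartesian_product split: split_indicator)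

lemma bind_map_uniform:
  assumes "finite A" "A \<noteq> {}" "finite B" "B \<noteq> {}"
  shows "bind_pmf (pmf_of_set A) (\<lambda>x. map_pmf (f x) (pmf_of_set B))
       = map_pmf (\<lambda>(x, y). f x y) (pmf_of_set (A \<times> B))"
  unfolding pmf_of_set_times[OF assms]
  by (simp add: pair_pmf_def map_bind_pmf map_pmf_def bind_assoc_pmf bind_return_pmf)

lemma split_pmf_eq: "split_pmf j = pmf_of_set (hist j)"
proof (induction j)
  case 0 then show ?case by (simp add: hist_0 pmf_of_set_singleton)
next
  case (Suc j)
  have "split_pmf (Suc j) = map_pmf (\<lambda>(xs, s). xs @ [s]) (pmf_of_set (hist j \<times> {0..<Suc j}))"
    by (simp add: Suc bind_map_uniform finite_hist hist_ne)
  also have "\<dots> = pmf_of_set (hist (Suc j))"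
    unfolding hist_Suc by (rule map_pmf_of_set_inj[OF inj_snoc]) (auto simp: finite_hist hist_ne)
  finally show ?case .
qed

lemma pairs_ne: "n \<ge> 2 \<Longrightarrow> pairs n \<noteq> {}"
proof -
  assume "n \<ge> 2"
  then have "(0, 1) \<in> pairs n" by (simp add: pairs_def)
  then show ?thesis by auto
qed

lemma card_pairs: "2 * real (card (pairs n)) = real n * (real n - 1)"
proof (induction n)
  case 0 then show ?case by (simp add: pairs_def)
next
  case (Suc n)
  have "card (pairs (Suc n)) = card (pairs n) + card ((\<lambda>a. (a, n)) ` {..<n})"
    unfolding pairs_Suc apply (rule card_Un_disjoint) apply (rule finite_pairs) apply simp
    by (auto simp: pairs_def)
  also have "card ((\<lambda>a. (a, n)) ` {..<n}) = n" by (subst card_image) (auto simp: inj_on_def)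
  finally show ?case using Suc by (simp add: algebra_simps)
qed

lemma pmf_kappa:
  assumes n: "n \<ge> 2"
  shows "pmf (kappa_pmf n) k = cnt n k / (fact (n - 1) * real (card (pairs n)))"
proof -
  define g where "g = (\<lambda>(xs, (a, b)). split_index n xs a b)"
  define S where "S = hist (n - 1) \<times> pairs n"
  have "kappa_pmf n = map_pmf g (pmf_of_set S)"
    unfolding kappa_pmf_def split_pmf_eq pairs_def[symmetric] S_def
    by (subst bind_map_uniform) (auto simp: finite_hist hist_ne finite_pairs pairs_ne n g_def)
  then have "pmf (kappa_pmf n) k = real (card (S \<inter> g -` {k})) / real (card S)"
    using n by (simp add: pmf_map measure_pmf_of_set S_def finite_hist hist_ne finite_pairs pairs_ne)
  also have "real (card (S \<inter> g -` {k})) = (\<Sum>q\<in>S. if g q = k then 1 else 0)"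
  proof -
    have fS: "finite S" by (simp add: S_def finite_hist finite_pairs)
    have "(\<Sum>q\<in>S. if g q = k then 1 else 0) = (\<Sum>q\<in>{x \<in> S. g x = k}. (1::real))"
      using fS by (rule sum.inter_filter[symmetric])
    moreover have "S \<inter> g -` {k} = {x \<in> S. g x = k}" by auto
    ultimately show ?thesis by simp
  qed
  also have "\<dots> = cnt n k"
    unfolding S_def cnt_def by (subst sum.cartesian_product) (simp add: g_def split_beta)
  also have "real (card S) = fact (n - 1) * real (card (pairs n))"
    by (simp add: S_def card_cartesian_product card_hist)
  finally show ?thesis .
qed

lemma alg1:
  assumes "(F::real) > 0" "(n::real) > 1" "(k::real) \<ge> 0"
  shows "(n*F*(n+1)/((k+1)*(k+2))) / (F*(n*(n-1)/2)) = 2*(n+1)/((n-1)*(k+1)*(k+2))"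
proof -
  have "n*F*(n+1)/((k+1)*(k+2)) / (F*(n*(n-1)/2)) = ((n*F)*(2*(n+1))) / ((n*F)*((n-1)*(k+1)*(k+2)))"
    by (simp add: divide_simps)
  also have "\<dots> = 2*(n+1)/((n-1)*(k+1)*(k+2))" using assms by (subst mult_divide_mult_cancel_left) auto
  finally show ?thesis .
qed

lemma pmf_kappa_closed:
  assumes n: "n \<ge> 2"
  shows "pmf (kappa_pmf n) k = (if 1 \<le> k \<and> k \<le> n - 1 then 2 * real (n + 1) / ((real n - 1) * real (k + 1) * real (k + 2)) else 0)"
proof -
  have c: "real (card (pairs n)) = real n * (real n - 1) / 2" using card_pairs[of n] by simp
  have f: "fact n = real n * fact (n - 1)" using n by (cases n) auto
  have pos: "real n - 1 > 0" "fact (n - 1) > (0::real)" using n by auto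
  have cc: "cnt n k = (if 1 \<le> k \<and> k \<le> n - 1 then fact n * real (n + 1) / (real (k + 1) * real (k + 2)) else 0)"
    using cnt_closed[of n k] n by simp
  show ?thesis
  proof (cases "1 \<le> k \<and> k \<le> n - 1")
    case True
    have "cnt n k / (fact (n - 1) * real (card (pairs n))) = 2 * real (n + 1) / ((real n - 1) * real (k + 1) * real (k + 2))"
      unfolding cc c f using True pos n alg1[of "fact (n - 1)" "real n" "real k"] by (simp add: add.commute)
    then show ?thesis using True unfolding pmf_kappa[OF n] by simp
  next
    case False
    have "cnt n k = 0" using False cc by simp
    then show ?thesis using False unfolding pmf_kappa[OF n] by auto
  qed
qed


definition lam :: "nat \<Rightarrow> real" where "lam i = (if i = 0 then 1 else real i)"

lemma lam_pos: "0 < lam i" by (simp add: lam_def)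

lemma yule_eq: "yule_space n = measure_pmf (kappa_pmf n) \<Otimes>\<^sub>M PiM {1..n} (\<lambda>i. density lborel (exponential_density (lam i)))"
  unfolding yule_space_def by (rule arg_cong[where f="\<lambda>N. _ \<Otimes>\<^sub>M N"], rule PiM_cong) (auto simp: lam_def)

lemma tau_eq:
  assumes n: "n \<ge> 2"
  shows "tau_moment n m = (\<Sum>k\<in>{1..n-1}. pmf (kappa_pmf n) k * (fact m * fps_nth (\<Prod>i\<in>{k<..n}. Efps (real i)) m))"
proof -
  define K where "K = measure_pmf (kappa_pmf n)"
  define M where "M = (\<lambda>i. density lborel (exponential_density (lam i)))"
  define N where "N = PiM {1..n} M"
  define f where "f = (\<lambda>p::nat \<times> (nat \<Rightarrow> real). (\<Sum>i\<in>{fst p<..n}. snd p i) ^ m)"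
  have probN: "prob_space N" unfolding N_def M_def
    by (rule prob_space_PiM) (rule prob_space_exponential_density[OF lam_pos])
  interpret N: prob_space N by (rule probN)
  interpret K: prob_space K unfolding K_def by (rule prob_space_measure_pmf)
  interpret KN: pair_sigma_finite K N
    by (simp add: pair_sigma_finite_def K.sigma_finite_measure_axioms N.sigma_finite_measure_axioms)
  have f_alt: "f p = (\<Sum>i\<in>{1..n}. (if fst p < i then 1 else 0) * snd p i) ^ m" for p
  proof -
    have "(\<Sum>i\<in>{fst p<..n}. snd p i) = (\<Sum>i\<in>{1..n}. (if fst p < i then 1 else 0) * snd p i)"
      by (rule sum.mono_neutral_cong_left) auto
    then show ?thesis by (simp add: f_def)
  qed
  have comp: "j \<in> {1..n} \<Longrightarrow> (\<lambda>x. x j) \<in> borel_measurable N" for j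
    using measurable_component_singleton[of j "{1..n}" M]
    by (simp add: N_def M_def cong: measurable_cong_sets)
  have fmeas: "f \<in> borel_measurable (K \<Otimes>\<^sub>M N)"
  proof -
    have ind: "(\<lambda>p. (if fst p < i then 1 else 0 :: real)) \<in> borel_measurable (K \<Otimes>\<^sub>M N)" for i
    proof -
      have "(\<lambda>k::nat. (if k < i then 1 else 0 :: real)) \<in> borel_measurable K"
        by (simp add: K_def)
      then show ?thesis by (rule measurable_compose[OF measurable_fst])
    qed
    have snd': "j \<in> {1..n} \<Longrightarrow> (\<lambda>p. snd p j) \<in> borel_measurable (K \<Otimes>\<^sub>M N)" for j
      using measurable_compose[OF measurable_snd comp] by blast
    show ?thesis unfolding f_alt[abs_def]
      using ind snd' by (intro borel_measurable_power borel_measurable_sum borel_measurable_times) auto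
  qed
  have AEN: "AE y in N. \<forall>i\<in>{1..n}. 0 \<le> y i"
  proof (rule AE_finite_allI)
    fix i assume i: "i \<in> {1..n}"
    interpret P: product_prob_space M "{1..n}"
      unfolding product_prob_space_def product_prob_space_axioms_def product_sigma_finite_def M_def
      using prob_space_exponential_density[OF lam_pos] by (auto simp: prob_space_imp_sigma_finite)
    have "AE x in M i. 0 \<le> x"
      unfolding M_def by (subst AE_density) (auto simp: exponential_density_def)
    then show "AE y in N. 0 \<le> y i" unfolding N_def by (rule P.AE_component[OF i])
  qed simp
  have AE: "AE p in K \<Otimes>\<^sub>M N. 0 \<le> f p"
  proof (rule KN.AE_pair_measure)
    show "{x \<in> space (K \<Otimes>\<^sub>M N). 0 \<le> f x} \<in> sets (K \<Otimes>\<^sub>M N)"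
      using fmeas by measurable
    show "AE x in K. AE y in N. 0 \<le> f (x, y)"
    proof (rule AE_I2)
      fix x
      show "AE y in N. 0 \<le> f (x, y)"
        using AEN by eventually_elim (auto simp: f_def intro!: sum_nonneg zero_le_power)
    qed
  qed
  have "tau_moment n m = integral\<^sup>L (K \<Otimes>\<^sub>M N) f"
    by (simp add: tau_moment_def yule_eq K_def N_def M_def f_def)
  also have "\<dots> = enn2real (\<integral>\<^sup>+ p. ennreal (f p) \<partial>(K \<Otimes>\<^sub>M N))"
    by (rule integral_eq_nn_integral[OF fmeas AE])
  also have "(\<integral>\<^sup>+ p. ennreal (f p) \<partial>(K \<Otimes>\<^sub>M N)) = (\<integral>\<^sup>+ x. \<integral>\<^sup>+ y. ennreal (f (x, y)) \<partial>N \<partial>K)"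
    using fmeas by (intro N.nn_integral_fst[symmetric]) measurable
  also have "\<dots> = (\<integral>\<^sup>+ x. ennreal (fact m * fps_nth (\<Prod>i\<in>{x<..n}. Efps (real i)) m) \<partial>K)"
  proof (rule nn_integral_cong)
    fix x
    have S: "{x<..n} \<subseteq> {1..n}" by auto
    have "(\<Prod>i\<in>{x<..n}. Efps (lam i)) = (\<Prod>i\<in>{x<..n}. Efps (real i))"
      by (rule prod.cong) (auto simp: lam_def)
    then show "(\<integral>\<^sup>+ y. ennreal (f (x, y)) \<partial>N) = ennreal (fact m * fps_nth (\<Prod>i\<in>{x<..n}. Efps (real i)) m)"
      using pim_moment[OF lam_pos, where I="{1..n}" and S="{x<..n}" and z=0 and m=m] S
      by (simp add: f_def N_def M_def)
  qed
  also have "\<dots> = (\<Sum>k\<in>{1..n-1}. ennreal (fact m * fps_nth (\<Prod>i\<in>{k<..n}. Efps (real i)) m) * pmf (kappa_pmf n) k)"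
    unfolding K_def
  proof (rule nn_integral_measure_pmf_support)
    fix x assume "x \<in> set_pmf (kappa_pmf n)" "x \<notin> {1..n-1}"
    then show "ennreal (fact m * fps_nth (\<Prod>i\<in>{x<..n}. Efps (real i)) m) = 0"
      using pmf_kappa_closed[OF n, of x] by (auto simp: set_pmf_iff)
  qed auto
  also have "\<dots> = ennreal (\<Sum>k\<in>{1..n-1}. pmf (kappa_pmf n) k * (fact m * fps_nth (\<Prod>i\<in>{k<..n}. Efps (real i)) m))"
  proof -
    have nn: "0 \<le> fps_nth (\<Prod>i\<in>{k<..n}. Efps (real i)) m" for k
      by (intro fps_nonneg_prod Efps_nonneg) auto
    show ?thesis using nn
      by (subst sum_ennreal[symmetric]) (auto intro!: sum.cong simp: ennreal_mult[symmetric] mult_ac)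
  qed
  finally show ?thesis
    by (simp add: enn2real_ennreal sum_nonneg fps_nonneg_prod Efps_nonneg)
qed


definition Bfps :: "real fps" where "Bfps = Abs_fps (\<lambda>k. (-1) ^ k)"

definition Dk :: "nat \<Rightarrow> real fps" where
  "Dk k = (\<Prod>j\<in>{1..k}. (1 - fps_const (1 / real j) * fps_X))"

lemma E_inv: "j \<noteq> 0 \<Longrightarrow> Efps (real j) * (1 - fps_const (1 / real j) * fps_X) = 1"
proof (rule fps_ext)
  fix k assume j: "j \<noteq> 0"
  have "Efps (real j) * (1 - fps_const (1 / real j) * fps_X) = Efps (real j) - fps_const (1 / real j) * (fps_X * Efps (real j))"
    by (simp add: algebra_simps)
  then show "fps_nth (Efps (real j) * (1 - fps_const (1 / real j) * fps_X)) k = fps_nth 1 k"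
    using j by (cases k) (auto simp: Efps_def power_divide)
qed

lemma B_inv: "Bfps * (1 + fps_X) = 1"
proof (rule fps_ext)
  fix k
  have "Bfps * (1 + fps_X) = Bfps + fps_X * Bfps" by (simp add: algebra_simps)
  then show "fps_nth (Bfps * (1 + fps_X)) k = fps_nth 1 k"
    by (cases k) (auto simp: Bfps_def)
qed

lemma Dk_Suc: "Dk (Suc k) = Dk k * (1 - fps_const (1 / real (Suc k)) * fps_X)"
  by (simp add: Dk_def atLeastAtMostSuc_conv mult_ac)

lemma Dk_1: "Dk 1 = 1 - fps_X"
  by (simp add: Dk_def)

lemma tele_step:
  fixes D Y :: "real fps" and a b c d :: real
  assumes "a - b + c = 0" "a = c * d"
  shows "fps_const a * (1 + Y) * D - fps_const b * D + fps_const c * (D * (1 - fps_const d * Y)) = 0"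
proof -
  have gen: "A * (1 + Y) * D - B * D + C * (D * (1 - E * Y)) = D * ((A - B + C) + (A - C * E) * Y)"
    for A B C E :: "real fps" by (simp add: algebra_simps)
  have "fps_const a * (1 + Y) * D - fps_const b * D + fps_const c * (D * (1 - fps_const d * Y))
      = D * ((fps_const a - fps_const b + fps_const c) + (fps_const a - fps_const c * fps_const d) * Y)"
    by (rule gen)
  also have "fps_const a - fps_const b + fps_const c = 0" using assms(1) by simp
  also have "fps_const a - fps_const c * fps_const d = 0" using assms(2) by simp
  finally show ?thesis by simp
qed

lemma telescope:
  assumes "n \<ge> 1"
  shows "(\<Sum>k\<in>{1..n-1}. fps_const (1 / (real (k + 1) * real (k + 2))) * (1 + fps_X) * Dk k)
       = fps_const (1/2) * (1 - fps_X) - fps_const (1 / real (n + 1)) * Dk n"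
  using assms
proof (induction n rule: dec_induct)
  case base
  show ?case by (simp add: Dk_def)
next
  case (step n)
  have "{1..Suc n - 1} = insert n {1..n-1}" using step.hyps by auto
  then have "(\<Sum>k\<in>{1..Suc n-1}. fps_const (1 / (real (k + 1) * real (k + 2))) * (1 + fps_X) * Dk k)
      = fps_const (1 / (real (n + 1) * real (n + 2))) * (1 + fps_X) * Dk n
        + (\<Sum>k\<in>{1..n-1}. fps_const (1 / (real (k + 1) * real (k + 2))) * (1 + fps_X) * Dk k)"
    using step.hyps by (simp add: sum.insert)
  also have "\<dots> = fps_const (1 / (real (n + 1) * real (n + 2))) * (1 + fps_X) * Dk n
        + (fps_const (1/2) * (1 - fps_X) - fps_const (1 / real (n + 1)) * Dk n)"
    using step.IH by simp
  also have "\<dots> = fps_const (1/2) * (1 - fps_X) - fps_const (1 / real (Suc n + 1)) * Dk (Suc n)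
      + (fps_const (1 / (real (n + 1) * real (n + 2))) * (1 + fps_X) * Dk n - fps_const (1 / real (n + 1)) * Dk n
         + fps_const (1 / real (n + 2)) * (Dk n * (1 - fps_const (1 / real (n + 1)) * fps_X)))"
    by (simp add: Dk_Suc algebra_simps)
  also have "fps_const (1 / (real (n + 1) * real (n + 2))) * (1 + fps_X) * Dk n - fps_const (1 / real (n + 1)) * Dk n
         + fps_const (1 / real (n + 2)) * (Dk n * (1 - fps_const (1 / real (n + 1)) * fps_X)) = 0"
    by (rule tele_step) (simp_all add: field_simps)
  finally show ?case by simp
qed

definition Gn :: "nat \<Rightarrow> real fps" where "Gn n = (\<Prod>j\<in>{1..n}. Efps (real j))"

definition Gfps :: "nat \<Rightarrow> real fps" where "Gfps n = (1 - fps_X) * Bfps * Gn n"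

lemma Pk:
  assumes "k \<le> n"
  shows "(\<Prod>i\<in>{k<..n}. Efps (real i)) = Gn n * Dk k"
proof -
  have split: "{1..n} = {1..k} \<union> {k<..n}" using assms by auto
  have "Gn n = (\<Prod>j\<in>{1..k}. Efps (real j)) * (\<Prod>i\<in>{k<..n}. Efps (real i))"
    unfolding Gn_def split by (rule prod.union_disjoint) auto
  moreover have "(\<Prod>j\<in>{1..k}. Efps (real j)) * Dk k = 1"
    unfolding Dk_def prod.distrib[symmetric] by (rule prod.neutral) (auto intro: E_inv)
  ultimately show ?thesis by (simp add: mult_ac)
qed

lemma fps_tau:
  assumes n: "n \<ge> 2"
  shows "(\<Sum>k\<in>{1..n-1}. fps_const (2 * real (n + 1) / ((real n - 1) * real (k + 1) * real (k + 2)))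
            * (\<Prod>i\<in>{k<..n}. Efps (real i)))
       = fps_const ((real n + 1) / (real n - 1)) * Gfps n - fps_const (2 / (real n - 1)) * Bfps"
proof -
  define C where "C = 2 * real (n + 1) / (real n - 1)"
  define T where "T = (\<Sum>k\<in>{1..n-1}. fps_const (1 / (real (k + 1) * real (k + 2))) * Dk k)"
  have "(\<Sum>k\<in>{1..n-1}. fps_const (2 * real (n + 1) / ((real n - 1) * real (k + 1) * real (k + 2)))
            * (\<Prod>i\<in>{k<..n}. Efps (real i)))
      = (\<Sum>k\<in>{1..n-1}. Gn n * fps_const C * (fps_const (1 / (real (k + 1) * real (k + 2))) * Dk k))"
  proof (rule sum.cong[OF refl])
    fix k assume k: "k \<in> {1..n-1}"
    have "fps_const (2 * real (n + 1) / ((real n - 1) * real (k + 1) * real (k + 2))) = fps_const C * fps_const (1 / (real (k + 1) * real (k + 2)))"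
      by (simp add: C_def)
    then show "fps_const (2 * real (n + 1) / ((real n - 1) * real (k + 1) * real (k + 2))) * (\<Prod>i\<in>{k<..n}. Efps (real i))
        = Gn n * fps_const C * (fps_const (1 / (real (k + 1) * real (k + 2))) * Dk k)"
    proof -
      have kn: "k \<le> n" using k by auto
      show ?thesis unfolding \<open>fps_const _ = _\<close> Pk[OF kn] by (simp only: mult_ac)
    qed
  qed
  also have "\<dots> = Gn n * fps_const C * T"
    by (simp add: T_def sum_distrib_left)
  also have "T = Bfps * ((1 + fps_X) * T)"
    using B_inv by (simp add: mult.assoc[symmetric])
  also have "(1 + fps_X) * T = fps_const (1/2) * (1 - fps_X) - fps_const (1 / real (n + 1)) * Dk n"
    using telescope[of n] n unfolding T_def by (simp add: sum_distrib_left mult_ac)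
  also have "Gn n * fps_const C * (Bfps * (fps_const (1/2) * (1 - fps_X) - fps_const (1 / real (n + 1)) * Dk n))
      = fps_const (C / 2) * ((1 - fps_X) * Bfps * Gn n) - fps_const (C / real (n + 1)) * Bfps * (Gn n * Dk n)"
  proof -
    have g: "G * K * (B * (H * (1 - X) - L * D)) = (K*H) * ((1 - X) * B * G) - (K*L) * B * (G * D)"
      for G K B H X L D :: "real fps" by (simp add: algebra_simps)
    have c1: "fps_const C * fps_const (1/2) = fps_const (C / 2)" by simp
    have c2: "fps_const C * fps_const (1 / real (n + 1)) = fps_const (C / real (n + 1))" by simp
    show ?thesis unfolding g c1 c2 ..
  qed
  also have "Gn n * Dk n = 1"
    using Pk[of n n] by simp
  also have "C / 2 = (real n + 1) / (real n - 1)"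
  proof -
    have "real n - 1 \<noteq> 0" using n by simp
    then show ?thesis by (simp add: C_def divide_simps algebra_simps)
  qed
  also have "C / real (n + 1) = 2 / (real n - 1)"
  proof -
    have "real n - 1 \<noteq> 0" "1 + real n \<noteq> 0" using n by simp_all
    moreover have "real n * real n \<ge> 2 * 2" using n by (intro mult_mono) auto
    ultimately show ?thesis by (simp add: C_def divide_simps algebra_simps)
  qed
  finally show ?thesis by (simp add: Gfps_def)
qed


definition aa :: "nat \<Rightarrow> nat \<Rightarrow> real" where
  "aa n i = Hnr n i - (if odd i then 2 else 0)"

definition Aser :: "nat \<Rightarrow> real fps" where
  "Aser n = Abs_fps (\<lambda>k. aa n (k + 1))"

definition Ones :: "real fps" where "Ones = Abs_fps (\<lambda>k. 1)"

lemma deriv_mult_rule: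
  fixes F G A B :: "real fps"
  assumes "fps_deriv F = A * F" "fps_deriv G = B * G"
  shows "fps_deriv (F * G) = (A + B) * (F * G)"
  using assms by (simp add: algebra_simps)

lemma deriv_prod_rule:
  fixes F A :: "'b \<Rightarrow> real fps"
  assumes "\<And>j. j \<in> S \<Longrightarrow> fps_deriv (F j) = A j * F j"
  shows "fps_deriv (\<Prod>j\<in>S. F j) = (\<Sum>j\<in>S. A j) * (\<Prod>j\<in>S. F j)"
  using assms
proof (induction S rule: infinite_finite_induct)
  case (insert x S)
  have "fps_deriv (F x * (\<Prod>j\<in>S. F j)) = (A x + (\<Sum>j\<in>S. A j)) * (F x * (\<Prod>j\<in>S. F j))"
    by (rule deriv_mult_rule) (use insert in auto)
  then show ?case using insert by simp
qed auto

lemma sum_const_pow: "(\<Sum>i=0..k. (c::real) ^ i * c ^ (k - i)) = real (k + 1) * c ^ k"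
proof -
  have "(\<Sum>i=0..k. c ^ i * c ^ (k - i)) = (\<Sum>i=0..k. c ^ k)"
    by (rule sum.cong) (auto simp: power_add[symmetric])
  then show ?thesis by simp
qed

lemma deriv_E: "fps_deriv (Efps l) = (fps_const (1 / l) * Efps l) * Efps l"
proof (rule fps_ext)
  fix k
  have "fps_nth (Efps l * Efps l) k = real (k + 1) * (1 / l) ^ k"
    by (simp add: fps_mult_nth Efps_def sum_const_pow)
  then show "fps_nth (fps_deriv (Efps l)) k = fps_nth ((fps_const (1 / l) * Efps l) * Efps l) k"
    by (simp only: mult.assoc fps_mult_left_const_nth) (simp add: Efps_def)
qed

lemma deriv_B: "fps_deriv Bfps = (- Bfps) * Bfps"
proof (rule fps_ext)
  fix k
  have "fps_nth (Bfps * Bfps) k = real (k + 1) * (-1) ^ k"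
    by (simp add: fps_mult_nth Bfps_def sum_const_pow)
  then show "fps_nth (fps_deriv Bfps) k = fps_nth ((- Bfps) * Bfps) k"
    by (simp add: Bfps_def)
qed

lemma Ones_inv: "Ones * (1 - fps_X) = 1"
proof (rule fps_ext)
  fix k
  have "Ones * (1 - fps_X) = Ones - fps_X * Ones" by (simp add: algebra_simps)
  then show "fps_nth (Ones * (1 - fps_X)) k = fps_nth 1 k"
    by (cases k) (auto simp: Ones_def)
qed

lemma deriv_1X: "fps_deriv (1 - fps_X :: real fps) = (- Ones) * (1 - fps_X)"
  using Ones_inv by simp

lemma deriv_G: "fps_deriv (Gfps n) = Aser n * Gfps n"
proof -
  have dG: "fps_deriv (Gn n) = (\<Sum>j\<in>{1..n}. fps_const (1 / real j) * Efps (real j)) * Gn n"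
    unfolding Gn_def by (rule deriv_prod_rule) (rule deriv_E)
  have "fps_deriv (Gfps n) = (- Ones + - Bfps + (\<Sum>j\<in>{1..n}. fps_const (1 / real j) * Efps (real j))) * Gfps n"
    unfolding Gfps_def by (intro deriv_mult_rule deriv_1X deriv_B dG)
  also have "- Ones + - Bfps + (\<Sum>j\<in>{1..n}. fps_const (1 / real j) * Efps (real j)) = Aser n"
  proof (rule fps_ext)
    fix k
    have "fps_nth (\<Sum>j\<in>{1..n}. fps_const (1 / real j) * Efps (real j)) k = Hnr n (k + 1)"
      by (simp add: fps_sum_nth Hnr_def Efps_def power_one_over)
    moreover have "- 1 - (-1) ^ k = - (if odd (k + 1) then 2 else (0::real))"
      by (cases "even k") auto
    ultimately show "fps_nth (- Ones + - Bfps + (\<Sum>j\<in>{1..n}. fps_const (1 / real j) * Efps (real j))) k = fps_nth (Aser n) k"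
      by (simp add: Aser_def aa_def Ones_def Bfps_def)
  qed
  finally show ?thesis .
qed

lemma G0: "fps_nth (Gfps n) 0 = 1"
proof -
  have "fps_nth (Gn n) 0 = 1" unfolding Gn_def
    by (induction n) (simp_all add: Efps_def atLeastAtMostSuc_conv prod.insert fps_mult_nth)
  then show ?thesis by (simp add: Gfps_def fps_mult_nth Bfps_def)
qed

lemma G_rec:
  assumes "m \<ge> 1"
  shows "real m * fps_nth (Gfps n) m = (\<Sum>i=1..m. aa n i * fps_nth (Gfps n) (m - i))"
proof -
  obtain p where p: "m = Suc p" using assms by (cases m) auto
  have "real m * fps_nth (Gfps n) m = fps_nth (fps_deriv (Gfps n)) p" by (simp add: p)
  also have "\<dots> = fps_nth (Aser n * Gfps n) p" by (simp add: deriv_G)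
  also have "\<dots> = (\<Sum>i=0..p. aa n (i + 1) * fps_nth (Gfps n) (p - i))"
    by (simp add: fps_mult_nth Aser_def)
  also have "\<dots> = (\<Sum>i=1..m. aa n i * fps_nth (Gfps n) (m - i))"
    unfolding p using sum.shift_bounds_cl_Suc_ivl[of "\<lambda>i. aa n i * fps_nth (Gfps n) (Suc p - i)" 0 p] by simp
  finally show ?thesis .
qed


definition supp :: "nat \<Rightarrow> (nat \<Rightarrow> int) \<Rightarrow> bool" where
  "supp N k \<longleftrightarrow> (\<forall>i. (i = 0 \<or> i > N) \<longrightarrow> k i = 0)"

definition wt :: "nat \<Rightarrow> (nat \<Rightarrow> int) \<Rightarrow> int" where
  "wt N k = (\<Sum>i=1..N. int i * k i)"

lemma Avec_iff: "k \<in> Avec m \<longleftrightarrow> supp m k \<and> (\<forall>i. k i \<ge> 0) \<and> wt m k = int m"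
  by (simp add: Avec_def supp_def wt_def)

lemma wt_extend: "supp N k \<Longrightarrow> N \<le> M \<Longrightarrow> wt M k = wt N k"
  unfolding wt_def supp_def
  by (rule sum.mono_neutral_right) auto

lemma prod_extend:
  fixes g :: "nat \<Rightarrow> int \<Rightarrow> 'a::comm_monoid_mult"
  assumes "supp N k" "N \<le> M" "\<And>i. g i 0 = 1"
  shows "(\<Prod>i=1..M. g i (k i)) = (\<Prod>i=1..N. g i (k i))"
  using assms unfolding supp_def
  by (intro prod.mono_neutral_right) auto

lemma term_le_wt:
  assumes "\<forall>i. k i \<ge> 0" "i \<in> {1..N}"
  shows "int i * k i \<le> wt N k"
  unfolding wt_def using assms
  by (intro member_le_sum) auto

lemma two_terms_le_wt:
  assumes "\<forall>i. k i \<ge> 0" "i \<in> {1..N}" "j \<in> {1..N}" "i \<noteq> j"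
  shows "int i * k i + int j * k j \<le> wt N k"
proof -
  have "(\<Sum>l\<in>{i, j}. int l * k l) \<le> wt N k"
    unfolding wt_def using assms by (intro sum_mono2) auto
  then show ?thesis using assms by simp
qed

lemma supp_shrink:
  assumes nn: "\<forall>i. k i \<ge> 0" and s: "supp M k" and w: "wt M k = int N" and NM: "N \<le> M"
  shows "supp N k"
  unfolding supp_def
proof (intro allI impI)
  fix i assume i: "i = 0 \<or> i > N"
  show "k i = 0"
  proof (cases "i = 0 \<or> i > M")
    case True then show ?thesis using s unfolding supp_def by blast
  next
    case False
    then have "i \<in> {1..M}" "i > N" using i by auto
    then have "int i * k i \<le> int N" using term_le_wt[OF nn, of i M] w by simp
    moreover have "k i \<ge> 0" using nn by simp
    ultimately show ?thesis using \<open>i > N\<close>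
    proof -
      assume a: "int i * k i \<le> int N" "k i \<ge> 0" "i > N"
      show "k i = 0"
      proof (rule ccontr)
        assume "k i \<noteq> 0"
        then have "k i \<ge> 1" using a by simp
        then have "int i * 1 \<le> int i * k i" by (intro mult_left_mono) auto
        moreover have "int N < int i" using a by simp
        ultimately show False using a by linarith
      qed
    qed
  qed
qed

lemma sum_upd:
  fixes g :: "nat \<Rightarrow> int \<Rightarrow> 'a::ab_group_add"
  assumes "finite A" "i \<in> A"
  shows "(\<Sum>j\<in>A. g j ((h(i := v)) j)) = (\<Sum>j\<in>A. g j (h j)) - g i (h i) + g i v"
proof -
  have "(\<Sum>j\<in>A. g j ((h(i := v)) j)) = g i v + (\<Sum>j\<in>A - {i}. g j (h j))"
    using assms by (subst sum.remove[of _ i]) (auto intro!: sum.cong)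
  moreover have "(\<Sum>j\<in>A. g j (h j)) = g i (h i) + (\<Sum>j\<in>A - {i}. g j (h j))"
    using assms by (subst sum.remove[of _ i]) auto
  ultimately show ?thesis by simp
qed

lemma prod_upd:
  fixes g :: "nat \<Rightarrow> int \<Rightarrow> 'a::comm_monoid_mult"
  assumes "finite A" "i \<in> A"
  shows "(\<Prod>j\<in>A. g j ((h(i := v)) j)) * g i (h i) = (\<Prod>j\<in>A. g j (h j)) * g i v"
proof -
  have "(\<Prod>j\<in>A. g j ((h(i := v)) j)) = g i v * (\<Prod>j\<in>A - {i}. g j (h j))"
    using assms by (subst prod.remove[of _ i]) (auto intro!: prod.cong)
  moreover have "(\<Prod>j\<in>A. g j (h j)) = g i (h i) * (\<Prod>j\<in>A - {i}. g j (h j))"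
    using assms by (subst prod.remove[of _ i]) auto
  ultimately show ?thesis by (simp add: mult_ac)
qed

lemma finite_Avec: "finite (Avec m)"
proof -
  have "Avec m \<subseteq> {f. \<forall>x. (x \<in> {1..m} \<longrightarrow> f x \<in> {0..int m}) \<and> (x \<notin> {1..m} \<longrightarrow> f x = 0)}"
  proof (safe)
    fix k x assume k: "k \<in> Avec m" and x: "x \<in> {1..m}"
    then have nn: "\<forall>i. k i \<ge> 0" and w: "wt m k = int m" by (auto simp: Avec_iff)
    have "int x * k x \<le> int m" using term_le_wt[OF nn x] w by simp
    moreover have "1 * k x \<le> int x * k x" using nn x by (intro mult_right_mono) auto
    ultimately show "k x \<in> {0..int m}" using nn by auto
  next
    fix k x assume k: "k \<in> Avec m" and "x \<notin> {1..m}"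
    then have "x = 0 \<or> x > m" by auto
    then show "k x = 0" using k unfolding Avec_def by blast
  qed
  then show ?thesis by (rule finite_subset) (intro finite_set_of_finite_funs; simp)
qed


definition gW :: "nat \<Rightarrow> int \<Rightarrow> real" where
  "gW i a = fact (nat a) * real i ^ nat a"

definition Wf :: "nat \<Rightarrow> (nat \<Rightarrow> int) \<Rightarrow> real" where
  "Wf N k = (\<Prod>i=1..N. gW i (k i))"

lemma gW_0[simp]: "gW i 0 = 1" by (simp add: gW_def)

lemma gW_pos: "i \<ge> 1 \<Longrightarrow> gW i a > 0" by (simp add: gW_def)

lemma Wf_pos: "Wf N k > 0" unfolding Wf_def by (intro prod_pos) (auto intro: gW_pos)

lemma gW_step:
  assumes "a \<ge> 1"
  shows "gW i a = gW i (a - 1) * (of_int a * real i)"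
proof -
  have "nat a = Suc (nat (a - 1))" using assms by simp
  moreover have "real (Suc (nat (a - 1))) = of_int a" using assms by simp
  ultimately show ?thesis unfolding gW_def
    by (simp only: fact_Suc of_nat_mult power_Suc) (simp add: mult_ac)
qed

lemma Wf_extend: "supp N k \<Longrightarrow> N \<le> M \<Longrightarrow> Wf M k = Wf N k"
  unfolding Wf_def by (rule prod_extend) auto

lemma ccoef_neg: "(\<exists>i\<ge>1. k i < 0) \<Longrightarrow> ccoef w k = 0"
  by (cases w) auto

lemma Avec_reduce:
  assumes nn: "\<forall>i. k i \<ge> 0" and s: "supp (Suc w) k" and wk: "wt (Suc w) k = int w"
  shows "k \<in> Avec w"
proof -
  have "supp w k" by (rule supp_shrink[OF nn s wk]) simp
  moreover have "wt w k = int w" using wt_extend[OF \<open>supp w k\<close>, of "Suc w"] wk by simp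
  ultimately show ?thesis using nn by (simp add: Avec_iff)
qed

lemma T1:
  assumes IH: "\<And>k'. k' \<in> Avec w \<Longrightarrow> real_of_int (ccoef w k') * Wf w k' = fact w"
    and k: "k \<in> Avec (Suc w)" and w: "w \<ge> 1"
  shows "real_of_int (ccoef w (k(1 := k 1 - 1))) * Wf (Suc w) k = fact w * real_of_int (k 1)"
proof -
  have nn: "\<forall>i. k i \<ge> 0" and s: "supp (Suc w) k" and wk: "wt (Suc w) k = int (Suc w)"
    using k by (auto simp: Avec_iff)
  show ?thesis
  proof (cases "k 1 = 0")
    case True
    then have "ccoef w (k(1 := k 1 - 1)) = 0" by (intro ccoef_neg) (auto intro!: exI[of _ 1])
    then show ?thesis using True by simp
  next
    case False
    have "k 1 \<ge> 0" using nn by simp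
    then have k1: "k 1 \<ge> 1" using False by linarith
    define k' where "k' = k(1 := k 1 - 1)"
    have nn': "\<forall>i. k' i \<ge> 0" using nn k1 by (simp add: k'_def)
    have s': "supp (Suc w) k'" using s by (simp add: supp_def k'_def)
    have "wt (Suc w) k' = wt (Suc w) k - int 1 * k 1 + int 1 * (k 1 - 1)"
      unfolding wt_def k'_def by (rule sum_upd[where g="\<lambda>i a. int i * a"]) auto
    then have wk': "wt (Suc w) k' = int w" using wk by simp
    have A: "k' \<in> Avec w" by (rule Avec_reduce[OF nn' s' wk'])
    have W1: "Wf (Suc w) k' * gW 1 (k 1) = Wf (Suc w) k * gW 1 (k 1 - 1)"
      unfolding Wf_def k'_def by (rule prod_upd[where g=gW]) auto
    have "gW 1 (k 1) = gW 1 (k 1 - 1) * of_int (k 1)" using gW_step[OF k1, of 1] by simp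
    then have "Wf (Suc w) k = Wf (Suc w) k' * of_int (k 1)"
      using W1 gW_pos[of 1 "k 1 - 1"] by (simp add: mult_ac)
    moreover have "Wf (Suc w) k' = Wf w k'" using A by (intro Wf_extend) (auto simp: Avec_iff)
    ultimately show ?thesis unfolding k'_def[symmetric] using IH[OF A] by (simp add: mult_ac)
  qed
qed

lemma Tj:
  assumes IH: "\<And>k'. k' \<in> Avec w \<Longrightarrow> real_of_int (ccoef w k') * Wf w k' = fact w"
    and k: "k \<in> Avec (Suc w)" and j: "j \<in> {1..w}"
  shows "real_of_int (int j * (k j + 1) * ccoef w (k(j := k j + 1, Suc j := k (Suc j) - 1))) * Wf (Suc w) k
     = fact w * real (Suc j) * real_of_int (k (Suc j))"
proof -
  have nn: "\<forall>i. k i \<ge> 0" and s: "supp (Suc w) k" and wk: "wt (Suc w) k = int (Suc w)"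
    using k by (auto simp: Avec_iff)
  show ?thesis
  proof (cases "k (Suc j) = 0")
    case True
    then have "ccoef w (k(j := k j + 1, Suc j := k (Suc j) - 1)) = 0"
      by (intro ccoef_neg) (auto intro!: exI[of _ "Suc j"])
    then show ?thesis using True by simp
  next
    case False
    have "k (Suc j) \<ge> 0" using nn by simp
    then have kj: "k (Suc j) \<ge> 1" using False by linarith
    define ka where "ka = k(j := k j + 1)"
    define k' where "k' = ka(Suc j := k (Suc j) - 1)"
    have k'eq: "k(j := k j + 1, Suc j := k (Suc j) - 1) = k'" by (simp add: k'_def ka_def)
    have nn': "\<forall>i. k' i \<ge> 0" using nn kj by (simp add: k'_def ka_def)
    have s': "supp (Suc w) k'" using s j by (simp add: supp_def k'_def ka_def)
    have "wt (Suc w) ka = wt (Suc w) k - int j * k j + int j * (k j + 1)"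
      unfolding wt_def ka_def using j by (intro sum_upd[where g="\<lambda>i a. int i * a"]) auto
    moreover have "wt (Suc w) k' = wt (Suc w) ka - int (Suc j) * ka (Suc j) + int (Suc j) * (k (Suc j) - 1)"
      unfolding wt_def k'_def using j by (intro sum_upd[where g="\<lambda>i a. int i * a"]) auto
    moreover have "ka (Suc j) = k (Suc j)" by (simp add: ka_def)
    ultimately have wk': "wt (Suc w) k' = int w" using wk by (simp add: algebra_simps)
    have A: "k' \<in> Avec w" by (rule Avec_reduce[OF nn' s' wk'])
    have W1: "Wf (Suc w) ka * gW j (k j) = Wf (Suc w) k * gW j (k j + 1)"
      unfolding Wf_def ka_def using j by (intro prod_upd[where g=gW]) auto
    have W2: "Wf (Suc w) k' * gW (Suc j) (ka (Suc j)) = Wf (Suc w) ka * gW (Suc j) (k (Suc j) - 1)"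
      unfolding Wf_def k'_def using j by (intro prod_upd[where g=gW]) auto
    have g1: "gW j (k j + 1) = gW j (k j) * (of_int (k j + 1) * real j)"
      using gW_step[of "k j + 1" j] nn by simp
    have g2: "gW (Suc j) (k (Suc j)) = gW (Suc j) (k (Suc j) - 1) * (of_int (k (Suc j)) * real (Suc j))"
      using gW_step[OF kj, of "Suc j"] by simp
    have pj: "gW j (k j) > 0" "gW (Suc j) (k (Suc j) - 1) > 0" using j by (auto intro: gW_pos)
    have Wa: "Wf (Suc w) ka = Wf (Suc w) k * (of_int (k j + 1) * real j)"
      using W1 g1 pj(1) by (simp add: mult_ac)
    have "Wf (Suc w) k' * (of_int (k (Suc j)) * real (Suc j)) = Wf (Suc w) ka"
      using W2 g2 pj(2) \<open>ka (Suc j) = k (Suc j)\<close> by (simp add: mult_ac)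
    then have key: "Wf (Suc w) k * (of_int (k j + 1) * real j) = Wf (Suc w) k' * (of_int (k (Suc j)) * real (Suc j))"
      using Wa by simp
    have "Wf (Suc w) k' = Wf w k'" using A by (intro Wf_extend) (auto simp: Avec_iff)
    then have I: "real_of_int (ccoef w k') * Wf (Suc w) k' = fact w" using IH[OF A] by simp
    have "real_of_int (int j * (k j + 1) * ccoef w k') * Wf (Suc w) k
        = real_of_int (ccoef w k') * (Wf (Suc w) k * (of_int (k j + 1) * real j))"
      by (simp add: mult_ac)
    also have "\<dots> = (real_of_int (ccoef w k') * Wf (Suc w) k') * (of_int (k (Suc j)) * real (Suc j))"
      unfolding key by (simp add: mult_ac)
    also have "\<dots> = fact w * real (Suc j) * real_of_int (k (Suc j))"
      unfolding I by (simp add: mult_ac)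
    finally show ?thesis unfolding k'eq .
  qed
qed

lemma wt_split: "wt (Suc w) k = k 1 + (\<Sum>j=1..w. int (Suc j) * k (Suc j))"
proof -
  have "wt (Suc w) k = int 1 * k 1 + (\<Sum>i=Suc 1..Suc w. int i * k i)"
    unfolding wt_def by (subst sum.atLeast_Suc_atMost) auto
  also have "(\<Sum>i=Suc 1..Suc w. int i * k i) = (\<Sum>j=1..w. int (Suc j) * k (Suc j))"
    by (rule sum.shift_bounds_cl_Suc_ivl)
  finally show ?thesis by simp
qed

lemma ccoef_closed: "k \<in> Avec w \<Longrightarrow> w \<ge> 1 \<Longrightarrow> real_of_int (ccoef w k) * Wf w k = fact w"
proof (induction w arbitrary: k)
  case 0 then show ?case by simp
next
  case (Suc w)
  have nn: "\<forall>i. k i \<ge> 0" and s: "supp (Suc w) k" and wk: "wt (Suc w) k = int (Suc w)"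
    using Suc.prems by (auto simp: Avec_iff)
  have c1: "\<not> ((\<forall>i\<ge>1. k i = 0) \<or> (\<exists>i\<ge>1. k i < 0))"
  proof
    assume "(\<forall>i\<ge>1. k i = 0) \<or> (\<exists>i\<ge>1. k i < 0)"
    then have "\<forall>i\<ge>1. k i = 0" using nn by (meson not_less)
    then have "wt (Suc w) k = 0" unfolding wt_def by (intro sum.neutral) auto
    then show False using wk by simp
  qed
  show ?case
  proof (cases "k 1 \<ge> 1 \<and> (\<forall>i\<ge>2. k i = 0)")
    case True
    then have cc: "ccoef (Suc w) k = 1" using c1 by simp
    have "(\<Sum>j=1..w. int (Suc j) * k (Suc j)) = 0" using True by (intro sum.neutral) auto
    then have k1: "k 1 = int (Suc w)" using wk wt_split[of w k] by simp
    have "Wf (Suc w) k = gW 1 (k 1) * (\<Prod>i=Suc 1..Suc w. gW i (k i))"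
      unfolding Wf_def by (subst prod.atLeast_Suc_atMost) auto
    also have "(\<Prod>i=Suc 1..Suc w. gW i (k i)) = 1" using True by (intro prod.neutral) auto
    moreover have "nat (k 1) = Suc w" using k1 by simp
    ultimately have "Wf (Suc w) k = fact (Suc w)" by (simp only: gW_def) simp
    then show ?thesis using cc by simp
  next
    case False
    have w1: "w \<ge> 1"
    proof (rule ccontr)
      assume "\<not> w \<ge> 1"
      then have w0: "w = 0" by simp
      then have "k 1 = 1" using wk by (simp add: wt_def)
      moreover have "\<forall>i\<ge>2. k i = 0" using s w0 by (simp add: supp_def)
      ultimately show False using False by simp
    qed
    have IH: "\<And>k'. k' \<in> Avec w \<Longrightarrow> real_of_int (ccoef w k') * Wf w k' = fact w"
      using Suc.IH w1 by blast
    have cc: "ccoef (Suc w) k = ccoef w (k(1 := k 1 - 1))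
         + (\<Sum>j=1..w. int j * (k j + 1) * ccoef w (k(j := k j + 1, Suc j := k (Suc j) - 1)))"
      using c1 False by (simp only: ccoef.simps if_False)
    have "real_of_int (ccoef (Suc w) k) * Wf (Suc w) k
       = real_of_int (ccoef w (k(1 := k 1 - 1))) * Wf (Suc w) k
         + (\<Sum>j=1..w. real_of_int (int j * (k j + 1) * ccoef w (k(j := k j + 1, Suc j := k (Suc j) - 1))) * Wf (Suc w) k)"
      unfolding cc by (simp add: algebra_simps sum_distrib_left)
    also have "\<dots> = fact w * real_of_int (k 1) + (\<Sum>j=1..w. fact w * real (Suc j) * real_of_int (k (Suc j)))"
      using T1[OF IH Suc.prems(1) w1] Tj[OF IH Suc.prems(1)] by simp
    also have "\<dots> = fact w * real_of_int (wt (Suc w) k)"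
      unfolding wt_split by (simp add: algebra_simps sum_distrib_left)
    also have "\<dots> = fact (Suc w)" using wk by simp
    finally show ?thesis .
  qed
qed


definition gT :: "(nat \<Rightarrow> real) \<Rightarrow> nat \<Rightarrow> int \<Rightarrow> real" where
  "gT y i a = y i ^ nat a / fact (nat a)"

definition Tt :: "(nat \<Rightarrow> real) \<Rightarrow> nat \<Rightarrow> (nat \<Rightarrow> int) \<Rightarrow> real" where
  "Tt y N k = (\<Prod>i=1..N. gT y i (k i))"

definition Ss :: "(nat \<Rightarrow> real) \<Rightarrow> nat \<Rightarrow> real" where
  "Ss y m = (\<Sum>k\<in>Avec m. Tt y m k)"

lemma gT_0[simp]: "gT y i 0 = 1" by (simp add: gT_def)

lemma gT_step: "a \<ge> 1 \<Longrightarrow> of_int a * gT y i a = y i * gT y i (a - 1)"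
proof -
  assume a: "a \<ge> 1"
  have na: "nat a = Suc (nat (a - 1))" using a by simp
  have ra: "real (Suc (nat (a - 1))) = of_int a" using a by simp
  have "gT y i a = y i * y i ^ nat (a - 1) / (real (Suc (nat (a - 1))) * fact (nat (a - 1)))"
    unfolding gT_def na by (simp only: fact_Suc of_nat_mult power_Suc)
  then show ?thesis using a unfolding ra by (simp add: gT_def field_simps)
qed

lemma supp_mono: "supp N k \<Longrightarrow> N \<le> M \<Longrightarrow> supp M k"
  by (auto simp: supp_def)

lemma Avec_0: "Avec 0 = {\<lambda>_. 0}"
  by (auto simp: Avec_def)

lemma Ss_0: "Ss y 0 = 1"
  by (simp add: Ss_def Avec_0 Tt_def)

lemma bij_dec:
  assumes i: "i \<in> {1..m}"
  shows "bij_betw (\<lambda>k. k(i := k i - 1)) {k \<in> Avec m. k i \<ge> 1} (Avec (m - i))"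
proof (rule bij_betw_byWitness[where f'="\<lambda>k. k(i := k i + 1)"])
  show "\<forall>k\<in>{k \<in> Avec m. k i \<ge> 1}. (k(i := k i - 1))(i := (k(i := k i - 1)) i + 1) = k" by auto
  show "\<forall>k\<in>Avec (m - i). (k(i := k i + 1))(i := (k(i := k i + 1)) i - 1) = k" by auto
  show "(\<lambda>k. k(i := k i - 1)) ` {k \<in> Avec m. k i \<ge> 1} \<subseteq> Avec (m - i)"
  proof safe
    fix k assume k: "k \<in> Avec m" "k i \<ge> 1"
    have nn: "\<forall>j. k j \<ge> 0" and s: "supp m k" and wk: "wt m k = int m"
      using k by (auto simp: Avec_iff)
    define k' where "k' = k(i := k i - 1)"
    have nn': "\<forall>j. k' j \<ge> 0" using nn k by (simp add: k'_def)
    have s': "supp m k'" using s i by (simp add: supp_def k'_def)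
    have "wt m k' = wt m k - int i * k i + int i * (k i - 1)"
      unfolding wt_def k'_def using i by (intro sum_upd[where g="\<lambda>i a. int i * a"]) auto
    then have wk': "wt m k' = int (m - i)" using wk i by (simp add: algebra_simps of_nat_diff)
    have s'': "supp (m - i) k'" by (rule supp_shrink[OF nn' s' wk']) simp
    have "wt (m - i) k' = int (m - i)" using wt_extend[OF s'', of m] wk' by simp
    then show "k(i := k i - 1) \<in> Avec (m - i)" using nn' s'' by (simp add: Avec_iff k'_def)
  qed
  show "(\<lambda>k. k(i := k i + 1)) ` Avec (m - i) \<subseteq> {k \<in> Avec m. k i \<ge> 1}"
  proof safe
    fix k assume k: "k \<in> Avec (m - i)"
    have nn: "\<forall>j. k j \<ge> 0" and s: "supp (m - i) k" and wk: "wt (m - i) k = int (m - i)"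
      using k by (auto simp: Avec_iff)
    define k' where "k' = k(i := k i + 1)"
    have nn': "\<forall>j. k' j \<ge> 0" using nn by (simp add: k'_def add_nonneg_nonneg)
    have s': "supp m k'" using supp_mono[OF s, of m] i by (simp add: supp_def k'_def)
    have "wt m k' = wt m k - int i * k i + int i * (k i + 1)"
      unfolding wt_def k'_def using i by (intro sum_upd[where g="\<lambda>i a. int i * a"]) auto
    moreover have "wt m k = wt (m - i) k" by (rule wt_extend[OF s]) simp
    ultimately have "wt m k' = int m" using wk i by (simp add: algebra_simps of_nat_diff)
    then show "k(i := k i + 1) \<in> Avec m" using nn' s' by (simp add: Avec_iff k'_def)
    show "1 \<le> (k(i := k i + 1)) i" using nn by simp
  qed
qed

lemma inner_sum:
  assumes i: "i \<in> {1..m}"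
  shows "(\<Sum>k\<in>Avec m. of_int (k i) * Tt y m k) = y i * Ss y (m - i)"
proof -
  have "(\<Sum>k\<in>Avec m. of_int (k i) * Tt y m k) = (\<Sum>k\<in>{k \<in> Avec m. k i \<ge> 1}. of_int (k i) * Tt y m k)"
  proof (rule sum.mono_neutral_right)
    show "finite (Avec m)" by (rule finite_Avec)
    show "\<forall>k\<in>Avec m - {k \<in> Avec m. 1 \<le> k i}. of_int (k i) * Tt y m k = 0"
    proof
      fix k assume k: "k \<in> Avec m - {k \<in> Avec m. 1 \<le> k i}"
      then have "k i \<ge> 0" "\<not> k i \<ge> 1" by (auto simp: Avec_def)
      then have "k i = 0" by linarith
      then show "of_int (k i) * Tt y m k = 0" by simp
    qed
  qed auto
  also have "\<dots> = (\<Sum>k\<in>{k \<in> Avec m. k i \<ge> 1}. y i * Tt y (m - i) (k(i := k i - 1)))"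
  proof (rule sum.cong[OF refl])
    fix k assume k: "k \<in> {k \<in> Avec m. k i \<ge> 1}"
    define k' where "k' = k(i := k i - 1)"
    have k'A: "k' \<in> Avec (m - i)" using bij_betwE[OF bij_dec[OF i]] k by (auto simp: k'_def)
    have R1: "Tt y m k = gT y i (k i) * (\<Prod>j\<in>{1..m} - {i}. gT y j (k j))"
      unfolding Tt_def using i by (subst prod.remove[of _ i]) auto
    have R2: "Tt y m k' = gT y i (k i - 1) * (\<Prod>j\<in>{1..m} - {i}. gT y j (k j))"
      unfolding Tt_def k'_def using i by (subst prod.remove[of _ i]) (auto intro!: prod.cong)
    have "of_int (k i) * Tt y m k = y i * Tt y m k'"
      unfolding R1 R2 using gT_step[of "k i" y i] k by (simp add: mult.assoc[symmetric])
    moreover have "Tt y m k' = Tt y (m - i) k'"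
      unfolding Tt_def using k'A by (intro prod_extend) (auto simp: Avec_iff)
    ultimately show "of_int (k i) * Tt y m k = y i * Tt y (m - i) (k(i := k i - 1))"
      by (simp add: k'_def)
  qed
  also have "\<dots> = y i * (\<Sum>k\<in>{k \<in> Avec m. k i \<ge> 1}. Tt y (m - i) (k(i := k i - 1)))"
    by (simp add: sum_distrib_left)
  also have "(\<Sum>k\<in>{k \<in> Avec m. k i \<ge> 1}. Tt y (m - i) (k(i := k i - 1))) = Ss y (m - i)"
    unfolding Ss_def using sum.reindex_bij_betw[OF bij_dec[OF i], of "Tt y (m - i)"] by simp
  finally show ?thesis .
qed

lemma Ss_rec:
  assumes "m \<ge> 1"
  shows "real m * Ss y m = (\<Sum>i=1..m. real i * y i * Ss y (m - i))"
proof -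
  have "real m * Ss y m = (\<Sum>k\<in>Avec m. real m * Tt y m k)"
    by (simp add: Ss_def sum_distrib_left)
  also have "\<dots> = (\<Sum>k\<in>Avec m. \<Sum>i=1..m. real i * (of_int (k i) * Tt y m k))"
  proof (rule sum.cong[OF refl])
    fix k assume k: "k \<in> Avec m"
    then have "wt m k = int m" by (simp add: Avec_iff)
    then have "real_of_int (wt m k) = real m" by simp
    then have "real m = (\<Sum>i=1..m. real i * of_int (k i))"
      unfolding wt_def by (simp add: of_int_sum)
    then show "real m * Tt y m k = (\<Sum>i=1..m. real i * (of_int (k i) * Tt y m k))"
      by (simp add: sum_distrib_right mult.assoc)
  qed
  also have "\<dots> = (\<Sum>i=1..m. real i * (\<Sum>k\<in>Avec m. of_int (k i) * Tt y m k))"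
    by (subst sum.swap) (simp add: sum_distrib_left)
  also have "\<dots> = (\<Sum>i=1..m. real i * y i * Ss y (m - i))"
    by (intro sum.cong refl) (simp add: inner_sum mult.assoc)
  finally show ?thesis .
qed


lemma Ss_eq_G: "Ss (\<lambda>i. aa n i / real i) m = fps_nth (Gfps n) m"
proof (induction m rule: less_induct)
  case (less m)
  show ?case
  proof (cases "m = 0")
    case True then show ?thesis by (simp add: Ss_0 G0)
  next
    case False
    then have m1: "m \<ge> 1" by simp
    have "real m * Ss (\<lambda>i. aa n i / real i) m = (\<Sum>i=1..m. real i * (aa n i / real i) * Ss (\<lambda>i. aa n i / real i) (m - i))"
      by (rule Ss_rec[OF m1])
    also have "\<dots> = (\<Sum>i=1..m. aa n i * fps_nth (Gfps n) (m - i))"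
      by (intro sum.cong refl) (auto simp: less.IH)
    also have "\<dots> = real m * fps_nth (Gfps n) m" by (rule G_rec[OF m1, symmetric])
    finally show ?thesis using m1 by simp
  qed
qed

lemma ccoef_sum:
  assumes m: "m \<ge> 1"
  shows "(\<Sum>k\<in>Avec m. real_of_int (ccoef m k)
                * (\<Prod>i\<in>{i\<in>{1..m}. even i}. Hnr n i ^ nat (k i))
                * (\<Prod>i\<in>{i\<in>{1..m}. odd i}. (Hnr n i - 2) ^ nat (k i)))
       = fact m * fps_nth (Gfps n) m"
proof -
  have "(\<Sum>k\<in>Avec m. real_of_int (ccoef m k)
                * (\<Prod>i\<in>{i\<in>{1..m}. even i}. Hnr n i ^ nat (k i))
                * (\<Prod>i\<in>{i\<in>{1..m}. odd i}. (Hnr n i - 2) ^ nat (k i)))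
      = (\<Sum>k\<in>Avec m. fact m * Tt (\<lambda>i. aa n i / real i) m k)"
  proof (rule sum.cong[OF refl])
    fix k assume k: "k \<in> Avec m"
    have split: "{1..m} = {i\<in>{1..m}. even i} \<union> {i\<in>{1..m}. odd i}" by auto
    have "(\<Prod>i=1..m. aa n i ^ nat (k i)) = (\<Prod>i\<in>{i\<in>{1..m}. even i}. aa n i ^ nat (k i)) * (\<Prod>i\<in>{i\<in>{1..m}. odd i}. aa n i ^ nat (k i))"
      by (subst split, rule prod.union_disjoint) auto
    also have "\<dots> = (\<Prod>i\<in>{i\<in>{1..m}. even i}. Hnr n i ^ nat (k i)) * (\<Prod>i\<in>{i\<in>{1..m}. odd i}. (Hnr n i - 2) ^ nat (k i))"
      by (intro arg_cong2[where f="(*)"] prod.cong) (auto simp: aa_def)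
    finally have P: "(\<Prod>i\<in>{i\<in>{1..m}. even i}. Hnr n i ^ nat (k i)) * (\<Prod>i\<in>{i\<in>{1..m}. odd i}. (Hnr n i - 2) ^ nat (k i))
        = (\<Prod>i=1..m. aa n i ^ nat (k i))" ..
    have c: "real_of_int (ccoef m k) = fact m / Wf m k"
      using ccoef_closed[OF k m] Wf_pos[of m k] by (simp add: field_simps)
    have "Tt (\<lambda>i. aa n i / real i) m k = (\<Prod>i=1..m. aa n i ^ nat (k i) / gW i (k i))"
      unfolding Tt_def gT_def gW_def by (intro prod.cong refl) (simp add: power_divide mult_ac)
    also have "\<dots> = (\<Prod>i=1..m. aa n i ^ nat (k i)) / Wf m k"
      unfolding Wf_def by (rule prod_dividef)
    finally have T: "Tt (\<lambda>i. aa n i / real i) m k = (\<Prod>i=1..m. aa n i ^ nat (k i)) / Wf m k" .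
    show "real_of_int (ccoef m k)
                * (\<Prod>i\<in>{i\<in>{1..m}. even i}. Hnr n i ^ nat (k i))
                * (\<Prod>i\<in>{i\<in>{1..m}. odd i}. (Hnr n i - 2) ^ nat (k i))
        = fact m * Tt (\<lambda>i. aa n i / real i) m k"
      unfolding T mult.assoc P c by simp
  qed
  also have "\<dots> = fact m * Ss (\<lambda>i. aa n i / real i) m"
    by (simp add: Ss_def sum_distrib_left)
  finally show ?thesis by (simp add: Ss_eq_G)
qed

lemma tau_G:
  assumes n: "n \<ge> 2"
  shows "tau_moment n m = (-1) ^ (m + 1) * 2 * fact m / (real n - 1)
      + (real n + 1) / (real n - 1) * (fact m * fps_nth (Gfps n) m)"
proof -
  have "tau_moment n m = (\<Sum>k\<in>{1..n-1}. pmf (kappa_pmf n) k * (fact m * fps_nth (\<Prod>i\<in>{k<..n}. Efps (real i)) m))"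
    by (rule tau_eq[OF n])
  also have "\<dots> = fact m * (\<Sum>k\<in>{1..n-1}. 2 * real (n + 1) / ((real n - 1) * real (k + 1) * real (k + 2))
        * fps_nth (\<Prod>i\<in>{k<..n}. Efps (real i)) m)"
    by (simp add: sum_distrib_left pmf_kappa_closed[OF n] mult_ac)
  also have "(\<Sum>k\<in>{1..n-1}. 2 * real (n + 1) / ((real n - 1) * real (k + 1) * real (k + 2))
        * fps_nth (\<Prod>i\<in>{k<..n}. Efps (real i)) m)
      = fps_nth (\<Sum>k\<in>{1..n-1}. fps_const (2 * real (n + 1) / ((real n - 1) * real (k + 1) * real (k + 2)))
            * (\<Prod>i\<in>{k<..n}. Efps (real i))) m"
    by (simp add: fps_sum_nth)
  also have "\<dots> = (real n + 1) / (real n - 1) * fps_nth (Gfps n) m - 2 / (real n - 1) * (-1) ^ m"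
    unfolding fps_tau[OF n] by (simp add: Bfps_def)
  finally show ?thesis by (simp add: algebra_simps)
qed


theorem theoremY4p2:
  fixes n m :: nat
  assumes "n \<ge> 2" and "m \<ge> 1"
  shows "tau_moment n m =
           (-1) ^ (m + 1) * 2 * fact m / (real n - 1)
           + (real n + 1) / (real n - 1) *
             (\<Sum>k\<in>Avec m. real_of_int (ccoef m k)
                * (\<Prod>i\<in>{i\<in>{1..m}. even i}. Hnr n i ^ nat (k i))
                * (\<Prod>i\<in>{i\<in>{1..m}. odd i}. (Hnr n i - 2) ^ nat (k i)))
         \<and> tau_moment n 1 = (real n + 1) / (real n - 1) * Hnr n 1 - 2 * real n / (real n - 1)
         \<and> tau_moment n 2 =
           (real n + 1) / (real n - 1) * ((Hnr n 1 - 2)^2 + Hnr n 2) - 4 / (real n - 1)"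
proof (intro conjI)
  show "tau_moment n m =
           (-1) ^ (m + 1) * 2 * fact m / (real n - 1)
           + (real n + 1) / (real n - 1) *
             (\<Sum>k\<in>Avec m. real_of_int (ccoef m k)
                * (\<Prod>i\<in>{i\<in>{1..m}. even i}. Hnr n i ^ nat (k i))
                * (\<Prod>i\<in>{i\<in>{1..m}. odd i}. (Hnr n i - 2) ^ nat (k i)))"
    unfolding ccoef_sum[OF assms(2)] by (rule tau_G[OF assms(1)])
  have g1: "fps_nth (Gfps n) 1 = Hnr n 1 - 2"
    using G_rec[of 1 n] G0[of n] by (simp add: aa_def)
  have g2: "2 * fps_nth (Gfps n) 2 = (Hnr n 1 - 2)^2 + Hnr n 2"
  proof -
    have "real 2 * fps_nth (Gfps n) 2 = (\<Sum>i=1..2. aa n i * fps_nth (Gfps n) (2 - i))"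
      by (rule G_rec) simp
    also have "\<dots> = aa n 1 * fps_nth (Gfps n) 1 + aa n 2 * fps_nth (Gfps n) 0"
      by (simp add: numeral_2_eq_2)
    finally show ?thesis using g1 G0[of n] by (simp add: aa_def power2_eq_square)
  qed
  have n1: "real n - 1 \<noteq> 0" using assms(1) by simp
  show "tau_moment n 1 = (real n + 1) / (real n - 1) * Hnr n 1 - 2 * real n / (real n - 1)"
    unfolding tau_G[OF assms(1)] g1 using n1 by (simp add: field_simps)
  show "tau_moment n 2 = (real n + 1) / (real n - 1) * ((Hnr n 1 - 2)^2 + Hnr n 2) - 4 / (real n - 1)"
  proof -
    have f2: "fact 2 = (2::real)" by (simp add: numeral_2_eq_2)
    have p3: "(-1::real) ^ (2 + 1) = -1" by simp
    have "tau_moment n 2 = - 1 * 2 * 2 / (real n - 1) + (real n + 1) / (real n - 1) * (2 * fps_nth (Gfps n) 2)"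
      unfolding tau_G[OF assms(1)] f2 p3 by simp
    then show ?thesis unfolding g2 by simp
  qed
qed


end
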